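(* For every $k\ge2$, and also for $k=*$, one has $[\bar D^{(k)}_x,\bar D^{(k)}_y]=0$. Moreover, for every $k\ge2$ and for $k=*$, every smooth function $f$ on $\bar{\mathcal E}_k$ (depending on finitely many coordinates) with $\bar D^{(k)}_x(f)=\bar D^{(k)}_y(f)=0$ is constant, i.e. the coverings $\bar{\mathcal E}_k\to\mathcal E_1$ are irreducible.
   Context: Let $\mathcal E_1$ be the system $u_y+vu_x=\frac1{v-u}$, $v_y+uv_x=\frac1{u-v}$ with internal coordinates $x,y,u_i=\partial^iu/\partial x^i$, $v_i=\partial^iv/\partial x^i$ ($i\ge0$) and total derivatives $D_x,D_y$ (with $D_y(u)=\frac1{v-u}-vu_1$, $D_y(v)=\frac1{u-v}-uv_1$). Put $\varphi^{(-1)}=1$, $\varphi^{(0)}=0$, $\varphi^{(1)}=-y$, $\varphi^{(2)}=-x$, let $\varphi^{(k)}$, $k\ge3$, be new coordinates and $\varphi(\lambda)=\sum_{k\ge-1}\varphi^{(k)}\lambda^k$. Define functions $\bar X^{(k)},\bar Y^{(k)}$ ($k\ge3$) of $x,y,u,v,\varphi^{(3)},\dots,\varphi^{(k-1)}$ as the unique ones for which, writing $\varphi_x=\sum_{k\ge1}\bar X^{(k)}\lambda^k$, $\varphi_y=\sum_{k\ge1}\bar Y^{(k)}\lambda^k$ with $\bar X^{(1)}=0,\bar X^{(2)}=-1,\bar Y^{(1)}=-1,\bar Y^{(2)}=0$, the identities $(\varphi-u)(\varphi-v)\varphi_x=-1$ and $(\varphi-u)(\varphi-v)\varphi_y=u+v-\varphi$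 hold coefficientwise in $\lambda$. For $k\ge2$, $\bar{\mathcal E}_k$ has coordinates of $\mathcal E_1$ together with $\varphi^{(3)},\dots,\varphi^{(k+1)}$, and $\bar D^{(k)}_x=D_x+\sum_{i=3}^{k+1}\bar X^{(i)}\partial/\partial\varphi^{(i)}$, $\bar D^{(k)}_y=D_y+\sum_{i=3}^{k+1}\bar Y^{(i)}\partial/\partial\varphi^{(i)}$; $\bar{\mathcal E}_*$ has all $\varphi^{(k)}$, $k\ge3$, with the infinite sums. *)

theory Defs
  imports "HOL-Analysis.Analysis" "HOL-Computational_Algebra.Formal_Power_Series"
    "HOL-Library.Extended_Nat"
begin

text \<open>Coordinates: x, y, u_i, v_i (i >= 0), phi^(j) (only j >= 3 are genuine coordinates).\<close>
datatype coord = CX | CY | CU nat | CV nat | CPhi nat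

type_synonym pt = "coord \<Rightarrow> real"

text \<open>Domain of the system: u <> v (where the right-hand sides are defined).\<close>
definition Dom :: "pt set" where
  "Dom = {p. p (CU 0) \<noteq> p (CV 0)}"

text \<open>Coordinates of the covering bar E_k; k = infinity encodes k = *.\<close>
definition allowed :: "enat \<Rightarrow> coord \<Rightarrow> bool" where
  "allowed k c = (case c of CPhi i \<Rightarrow> 3 \<le> i \<and> enat i \<le> k + 1 | _ \<Rightarrow> True)"

definition pd :: "coord \<Rightarrow> (pt \<Rightarrow> real) \<Rightarrow> pt \<Rightarrow> real" where
  "pd c f p = deriv (\<lambda>t. f (p(c := t))) (p c)"

fun smooth_n :: "nat \<Rightarrow> (pt \<Rightarrow> real) \<Rightarrow> bool" where
  "smooth_n 0 f = continuous_on Dom f"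
| "smooth_n (Suc n) f = (continuous_on Dom f \<and>
      (\<forall>c. \<forall>p\<in>Dom. (\<lambda>t. f (p(c := t))) differentiable (at (p c))) \<and>
      (\<forall>c. smooth_n n (pd c f)))"

definition smooth :: "(pt \<Rightarrow> real) \<Rightarrow> bool" where
  "smooth f = (\<forall>n. smooth_n n f)"

definition depends_only :: "(pt \<Rightarrow> real) \<Rightarrow> coord set \<Rightarrow> bool" where
  "depends_only f S = (\<forall>p q. (\<forall>c\<in>S. p c = q c) \<longrightarrow> f p = f q)"

definition smooth_fun_on :: "enat \<Rightarrow> (pt \<Rightarrow> real) \<Rightarrow> bool" where
  "smooth_fun_on k f = (\<exists>S. finite S \<and> (\<forall>c\<in>S. allowed k c) \<and> depends_only f S \<and> smooth f)"

text \<open>Vector field with coefficients coef applied to f (the sum is finite for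
  finitely dependent f).\<close>
definition vf :: "(coord \<Rightarrow> pt \<Rightarrow> real) \<Rightarrow> (pt \<Rightarrow> real) \<Rightarrow> pt \<Rightarrow> real" where
  "vf coef f p = (\<Sum>c\<in>{c. pd c f p \<noteq> 0}. coef c p * pd c f p)"

definition Dx1_coef :: "coord \<Rightarrow> pt \<Rightarrow> real" where
  "Dx1_coef c p = (case c of CX \<Rightarrow> 1 | CY \<Rightarrow> 0 | CU i \<Rightarrow> p (CU (Suc i))
      | CV i \<Rightarrow> p (CV (Suc i)) | CPhi _ \<Rightarrow> 0)"

definition Dx1 :: "(pt \<Rightarrow> real) \<Rightarrow> pt \<Rightarrow> real" where
  "Dx1 = vf Dx1_coef"

definition Fu :: "pt \<Rightarrow> real" where
  "Fu p = 1 / (p (CV 0) - p (CU 0)) - p (CV 0) * p (CU 1)"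

definition Fv :: "pt \<Rightarrow> real" where
  "Fv p = 1 / (p (CU 0) - p (CV 0)) - p (CU 0) * p (CV 1)"

text \<open>lambda * phi(lambda) as a formal power series: coefficient n is phi^(n-1),
  with phi^(-1)=1, phi^(0)=0, phi^(1)=-y, phi^(2)=-x.\<close>
definition lphi :: "pt \<Rightarrow> real fps" where
  "lphi p = Abs_fps (\<lambda>n. if n = 0 then 1 else if n = 1 then 0
      else if n = 2 then - p CY else if n = 3 then - p CX else p (CPhi (n - 1)))"

text \<open>lambda^2 (phi - u)(phi - v).\<close>
definition Qser :: "pt \<Rightarrow> real fps" where
  "Qser p = (lphi p - fps_const (p (CU 0)) * fps_X) * (lphi p - fps_const (p (CV 0)) * fps_X)"

text \<open>phi_x = sum Xbar^(k) lambda^k: unique series with (phi-u)(phi-v) phi_x = -1,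
  i.e. lambda^2 (phi-u)(phi-v) phi_x = - lambda^2.\<close>
definition Xser :: "pt \<Rightarrow> real fps" where
  "Xser p = (THE F. Qser p * F = - (fps_X ^ 2))"

text \<open>phi_y: (phi-u)(phi-v) phi_y = u + v - phi, multiplied by lambda^2.\<close>
definition Yser :: "pt \<Rightarrow> real fps" where
  "Yser p = (THE F. Qser p * F = fps_const (p (CU 0) + p (CV 0)) * fps_X ^ 2 - fps_X * lphi p)"

definition Xbar :: "nat \<Rightarrow> pt \<Rightarrow> real" where
  "Xbar j p = fps_nth (Xser p) j"

definition Ybar :: "nat \<Rightarrow> pt \<Rightarrow> real" where
  "Ybar j p = fps_nth (Yser p) j"

definition Dxb_coef :: "enat \<Rightarrow> coord \<Rightarrow> pt \<Rightarrow> real" where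
  "Dxb_coef k c p = (case c of CX \<Rightarrow> 1 | CY \<Rightarrow> 0 | CU i \<Rightarrow> p (CU (Suc i))
      | CV i \<Rightarrow> p (CV (Suc i))
      | CPhi j \<Rightarrow> (if allowed k (CPhi j) then Xbar j p else 0))"

definition Dyb_coef :: "enat \<Rightarrow> coord \<Rightarrow> pt \<Rightarrow> real" where
  "Dyb_coef k c p = (case c of CX \<Rightarrow> 0 | CY \<Rightarrow> 1 | CU i \<Rightarrow> (Dx1 ^^ i) Fu p
      | CV i \<Rightarrow> (Dx1 ^^ i) Fv p
      | CPhi j \<Rightarrow> (if allowed k (CPhi j) then Ybar j p else 0))"

definition Dxb :: "enat \<Rightarrow> (pt \<Rightarrow> real) \<Rightarrow> pt \<Rightarrow> real" where
  "Dxb k = vf (Dxb_coef k)"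

definition Dyb :: "enat \<Rightarrow> (pt \<Rightarrow> real) \<Rightarrow> pt \<Rightarrow> real" where
  "Dyb k = vf (Dyb_coef k)"

end

theory Submission
  imports Defs "HOL-Computational_Algebra.Polynomial"
begin


definition pdiff :: "coord \<Rightarrow> (pt \<Rightarrow> real) \<Rightarrow> pt \<Rightarrow> bool" where
  "pdiff c f p = ((\<lambda>t. f (p(c := t))) differentiable (at (p c)))"

lemma pd_has: "pdiff c f p \<Longrightarrow> ((\<lambda>t. f (p(c:=t))) has_real_derivative pd c f p) (at (p c))"
  unfolding pdiff_def pd_def using DERIV_deriv_iff_real_differentiable by blast

lemma pd_eqI: "((\<lambda>t. f (p(c:=t))) has_real_derivative D) (at (p c)) \<Longrightarrow> pd c f p = D"
  unfolding pd_def by (rule DERIV_imp_deriv)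

lemma pdiffI: "((\<lambda>t. f (p(c:=t))) has_real_derivative D) (at (p c)) \<Longrightarrow> pdiff c f p"
  unfolding pdiff_def using real_differentiable_def by blast

lemma has_const: "((\<lambda>t. f (p(c:=t))) has_real_derivative 0) (at (p c))" if "\<And>t. f (p(c:=t)) = a"
  using that by simp

lemma pd_const[simp]: "pd c (\<lambda>q. a) p = 0"
  by (rule pd_eqI) simp
lemma pdiff_const[simp]: "pdiff c (\<lambda>q. a) p"
  by (rule pdiffI[of _ _ _ 0]) simp

lemma has_coord: "((\<lambda>t. (p(c:=t)) d) has_real_derivative (if c = d then 1 else 0)) (at (p c))"
  by (cases "c = d") auto
lemma pd_coord[simp]: "pd c (\<lambda>q. q d) p = (if c = d then 1 else 0)"
  by (rule pd_eqI[OF has_coord])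
lemma pdiff_coord[simp]: "pdiff c (\<lambda>q. q d) p"
  by (rule pdiffI[OF has_coord])

lemma has_add: "pdiff c f p \<Longrightarrow> pdiff c g p \<Longrightarrow>
  ((\<lambda>t. f (p(c:=t)) + g (p(c:=t))) has_real_derivative pd c f p + pd c g p) (at (p c))"
  by (intro DERIV_add pd_has)
lemma pd_add: "pdiff c f p \<Longrightarrow> pdiff c g p \<Longrightarrow> pd c (\<lambda>q. f q + g q) p = pd c f p + pd c g p"
  by (rule pd_eqI, rule has_add)
lemma pdiff_add: "pdiff c f p \<Longrightarrow> pdiff c g p \<Longrightarrow> pdiff c (\<lambda>q. f q + g q) p"
  by (rule pdiffI, rule has_add)

lemma has_diff: "pdiff c f p \<Longrightarrow> pdiff c g p \<Longrightarrow>
  ((\<lambda>t. f (p(c:=t)) - g (p(c:=t))) has_real_derivative pd c f p - pd c g p) (at (p c))"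
  by (intro DERIV_diff pd_has)
lemma pd_diff: "pdiff c f p \<Longrightarrow> pdiff c g p \<Longrightarrow> pd c (\<lambda>q. f q - g q) p = pd c f p - pd c g p"
  by (rule pd_eqI, rule has_diff)
lemma pdiff_diff: "pdiff c f p \<Longrightarrow> pdiff c g p \<Longrightarrow> pdiff c (\<lambda>q. f q - g q) p"
  by (rule pdiffI, rule has_diff)

lemma has_minus: "pdiff c f p \<Longrightarrow>
  ((\<lambda>t. - f (p(c:=t))) has_real_derivative - pd c f p) (at (p c))"
  by (intro DERIV_minus pd_has)
lemma pd_minus: "pdiff c f p \<Longrightarrow> pd c (\<lambda>q. - f q) p = - pd c f p"
  by (rule pd_eqI, rule has_minus)
lemma pdiff_minus: "pdiff c f p \<Longrightarrow> pdiff c (\<lambda>q. - f q) p"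
  by (rule pdiffI, rule has_minus)

lemma has_mult: "pdiff c f p \<Longrightarrow> pdiff c g p \<Longrightarrow>
  ((\<lambda>t. f (p(c:=t)) * g (p(c:=t))) has_real_derivative pd c f p * g p + f p * pd c g p) (at (p c))"
proof -
  assume a: "pdiff c f p" "pdiff c g p"
  have "((\<lambda>t. f (p(c:=t)) * g (p(c:=t))) has_real_derivative pd c f p * g (p(c:=p c)) + pd c g p * f (p(c:=p c))) (at (p c))"
    by (rule DERIV_mult[OF pd_has[OF a(1)] pd_has[OF a(2)]])
  then show ?thesis by (simp add: mult.commute)
qed
lemma pd_mult: "pdiff c f p \<Longrightarrow> pdiff c g p \<Longrightarrow> pd c (\<lambda>q. f q * g q) p = pd c f p * g p + f p * pd c g p"
  by (rule pd_eqI, rule has_mult)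
lemma pdiff_mult: "pdiff c f p \<Longrightarrow> pdiff c g p \<Longrightarrow> pdiff c (\<lambda>q. f q * g q) p"
  by (rule pdiffI, rule has_mult)

lemma has_sum: "finite I \<Longrightarrow> (\<And>i. i \<in> I \<Longrightarrow> pdiff c (f i) p) \<Longrightarrow>
  ((\<lambda>t. \<Sum>i\<in>I. f i (p(c:=t))) has_real_derivative (\<Sum>i\<in>I. pd c (f i) p)) (at (p c))"
  by (intro DERIV_sum pd_has) auto
lemma pd_sum: "finite I \<Longrightarrow> (\<And>i. i \<in> I \<Longrightarrow> pdiff c (f i) p) \<Longrightarrow>
   pd c (\<lambda>q. \<Sum>i\<in>I. f i q) p = (\<Sum>i\<in>I. pd c (f i) p)"
  by (rule pd_eqI, rule has_sum)
lemma pdiff_sum: "finite I \<Longrightarrow> (\<And>i. i \<in> I \<Longrightarrow> pdiff c (f i) p) \<Longrightarrow>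
   pdiff c (\<lambda>q. \<Sum>i\<in>I. f i q) p"
  by (rule pdiffI, rule has_sum)

lemma dep_line: "depends_only f S \<Longrightarrow> c \<notin> S \<Longrightarrow> f (p(c:=t)) = f p"
  unfolding depends_only_def by (metis fun_upd_other)

lemma pd_notin: "depends_only f S \<Longrightarrow> c \<notin> S \<Longrightarrow> pd c f p = 0"
  by (rule pd_eqI) (simp add: dep_line)
lemma pdiff_notin: "depends_only f S \<Longrightarrow> c \<notin> S \<Longrightarrow> pdiff c f p"
  by (rule pdiffI[of _ _ _ 0]) (simp add: dep_line)

lemma depends_mono: "depends_only f S \<Longrightarrow> S \<subseteq> T \<Longrightarrow> depends_only f T"
  unfolding depends_only_def by blast

lemma depends_pd: assumes "depends_only f S" shows "depends_only (pd c f) S"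
  unfolding depends_only_def
proof (intro allI impI)
  fix p q :: pt assume a: "\<forall>c\<in>S. p c = q c"
  show "pd c f p = pd c f q"
  proof (cases "c \<in> S")
    case True
    have "(\<lambda>t. f (p(c:=t))) = (\<lambda>t. f (q(c:=t)))"
      using assms a unfolding depends_only_def by (intro ext) (metis fun_upd_apply)
    then show ?thesis unfolding pd_def using True a by simp
  next
    case False then show ?thesis using pd_notin[OF assms] by simp
  qed
qed

lemma depends_const: "depends_only (\<lambda>q. a) S" unfolding depends_only_def by simp
lemma depends_coord: "d \<in> S \<Longrightarrow> depends_only (\<lambda>q. q d) S" unfolding depends_only_def by simp
lemma depends_add: "depends_only f S \<Longrightarrow> depends_only g S \<Longrightarrow> depends_only (\<lambda>q. f q + g q) S"
proof -
  assume a: "depends_only f S" "depends_only g S"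
  show ?thesis unfolding depends_only_def
  proof (intro allI impI)
    fix p q :: pt assume h: "\<forall>c\<in>S. p c = q c"
    have "f p = f q" "g p = g q" using a h unfolding depends_only_def by blast+
    then show "f p + g p = f q + g q" by simp
  qed
qed
lemma depends_mult: "depends_only f S \<Longrightarrow> depends_only g S \<Longrightarrow> depends_only (\<lambda>q. f q * g q) S"
proof -
  assume a: "depends_only f S" "depends_only g S"
  show ?thesis unfolding depends_only_def
  proof (intro allI impI)
    fix p q :: pt assume h: "\<forall>c\<in>S. p c = q c"
    have "f p = f q" "g p = g q" using a h unfolding depends_only_def by blast+
    then show "f p * g p = f q * g q" by simp
  qed
qed
lemma depends_sum: "(\<And>i. i \<in> I \<Longrightarrow> depends_only (f i) S) \<Longrightarrow> depends_only (\<lambda>q. \<Sum>i\<in>I. f i q) S"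
  unfolding depends_only_def by (auto intro: sum.cong)

lemma vf_finite: assumes "finite S" "depends_only f S"
  shows "vf coef f p = (\<Sum>c\<in>S. coef c p * pd c f p)"
proof -
  have sub: "{c. pd c f p \<noteq> 0} \<subseteq> S" using pd_notin[OF assms(2)] by blast
  show ?thesis unfolding vf_def
    by (rule sum.mono_neutral_left[OF assms(1) sub]) auto
qed

lemma vf_fun: assumes "finite S" "depends_only f S"
  shows "vf coef f = (\<lambda>p. \<Sum>c\<in>S. coef c p * pd c f p)"
  using vf_finite[OF assms] by auto

lemma dom_ev: assumes "p \<in> Dom" shows "eventually (\<lambda>t. p(c:=t) \<in> Dom) (nhds (p c))"
proof -
  have uv: "p (CU 0) \<noteq> p (CV 0)" using assms by (simp add: Dom_def)
  consider "c = CU 0" | "c = CV 0" | "c \<noteq> CU 0" "c \<noteq> CV 0" by blast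
  then show ?thesis
  proof cases
    case 1
    have "eventually (\<lambda>t. t \<noteq> p (CV 0)) (nhds (p c))" using uv 1 by (intro t1_space_nhds) simp
    then show ?thesis by eventually_elim (simp add: Dom_def 1)
  next
    case 2
    have "eventually (\<lambda>t. t \<noteq> p (CU 0)) (nhds (p c))" using uv 2 by (intro t1_space_nhds) simp
    then show ?thesis by eventually_elim (simp add: Dom_def 2)
  next
    case 3 then show ?thesis using uv by (simp add: Dom_def)
  qed
qed

lemma pd_cong_ev: assumes "eventually (\<lambda>t. f (p(c:=t)) = g (p(c:=t))) (nhds (p c))"
  shows "pd c f p = pd c g p"
  unfolding pd_def by (rule deriv_cong_ev[OF assms refl])

lemma pdiff_cong_ev: assumes "eventually (\<lambda>t. f (p(c:=t)) = g (p(c:=t))) (nhds (p c))"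
  and "pdiff c f p" shows "pdiff c g p"
proof -
  have "((\<lambda>t. g (p(c:=t))) has_real_derivative pd c f p) (at (p c))"
    using pd_has[OF assms(2)] DERIV_cong_ev[OF refl assms(1) refl] by simp
  then show ?thesis by (rule pdiffI)
qed

lemma pd_cong_dom: "p \<in> Dom \<Longrightarrow> (\<And>q. q \<in> Dom \<Longrightarrow> f q = g q) \<Longrightarrow> pd c f p = pd c g p"
  by (rule pd_cong_ev, rule eventually_mono[OF dom_ev[of p c]]) auto
lemma pdiff_cong_dom: "p \<in> Dom \<Longrightarrow> (\<And>q. q \<in> Dom \<Longrightarrow> f q = g q) \<Longrightarrow> pdiff c f p \<Longrightarrow> pdiff c g p"
  by (rule pdiff_cong_ev[of f], rule eventually_mono[OF dom_ev[of p c]]) auto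


fun Ck :: "nat \<Rightarrow> (pt \<Rightarrow> real) \<Rightarrow> bool" where
  "Ck 0 g = True"
| "Ck (Suc n) g = ((\<forall>c. \<forall>p\<in>Dom. pdiff c g p) \<and> (\<forall>c. Ck n (pd c g)))"

lemma Ck_down: "Ck (Suc n) g \<Longrightarrow> Ck n g"
proof (induction n arbitrary: g)
  case 0 then show ?case by simp
next
  case (Suc n) then show ?case by (metis Ck.simps(2))
qed

lemma Ck_cong: "Ck n g \<Longrightarrow> (\<And>q. q \<in> Dom \<Longrightarrow> g q = h q) \<Longrightarrow> Ck n h"
proof (induction n arbitrary: g h)
  case 0 then show ?case by simp
next
  case (Suc n)
  show ?case unfolding Ck.simps
  proof (intro conjI allI ballI)
    fix c p assume "p \<in> Dom"
    then show "pdiff c h p" by (rule pdiff_cong_dom[of p g h]) (use Suc.prems \<open>p \<in> Dom\<close> in auto)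
  next
    fix c
    have "Ck n (pd c g)" using Suc.prems by simp
    then show "Ck n (pd c h)"
      by (rule Suc.IH) (rule pd_cong_dom, use Suc.prems in auto)
  qed
qed

lemma Ck_const: "Ck n (\<lambda>q. a)"
proof (induction n arbitrary: a)
  case 0 then show ?case by simp
next
  case (Suc n)
  have "pd c (\<lambda>q. a) = (\<lambda>q. 0)" for c by (rule ext) simp
  then show ?case using Suc by simp
qed

lemma Ck_coord: "Ck n (\<lambda>q. q d)"
proof (cases n)
  case 0 then show ?thesis by simp
next
  case (Suc m)
  have "pd c (\<lambda>q. q d) = (\<lambda>q. if c = d then 1 else 0)" for c by (rule ext) simp
  then show ?thesis using Suc Ck_const by simp
qed

lemma Ck_add: "Ck n f \<Longrightarrow> Ck n g \<Longrightarrow> Ck n (\<lambda>q. f q + g q)"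
proof (induction n arbitrary: f g)
  case 0 then show ?case by simp
next
  case (Suc n)
  show ?case unfolding Ck.simps
  proof (intro conjI allI ballI)
    fix c p assume "p \<in> Dom"
    then show "pdiff c (\<lambda>q. f q + g q) p" using Suc.prems by (intro pdiff_add) auto
  next
    fix c
    have "Ck n (\<lambda>q. pd c f q + pd c g q)" using Suc by simp
    then show "Ck n (pd c (\<lambda>q. f q + g q))"
      by (rule Ck_cong) (rule pd_add[symmetric], use Suc.prems in auto)
  qed
qed

lemma Ck_minus: "Ck n f \<Longrightarrow> Ck n (\<lambda>q. - f q)"
proof (induction n arbitrary: f)
  case 0 then show ?case by simp
next
  case (Suc n)
  show ?case unfolding Ck.simps
  proof (intro conjI allI ballI)
    fix c p assume "p \<in> Dom"
    then show "pdiff c (\<lambda>q. - f q) p" using Suc.prems by (intro pdiff_minus) auto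
  next
    fix c
    have "Ck n (\<lambda>q. - pd c f q)" using Suc by simp
    then show "Ck n (pd c (\<lambda>q. - f q))"
      by (rule Ck_cong) (rule pd_minus[symmetric], use Suc.prems in auto)
  qed
qed

lemma Ck_diff: "Ck n f \<Longrightarrow> Ck n g \<Longrightarrow> Ck n (\<lambda>q. f q - g q)"
  using Ck_add[OF _ Ck_minus, of n f g] by simp

lemma Ck_mult: "Ck n f \<Longrightarrow> Ck n g \<Longrightarrow> Ck n (\<lambda>q. f q * g q)"
proof (induction n arbitrary: f g)
  case 0 then show ?case by simp
next
  case (Suc n)
  show ?case unfolding Ck.simps
  proof (intro conjI allI ballI)
    fix c p assume "p \<in> Dom"
    then show "pdiff c (\<lambda>q. f q * g q) p" using Suc.prems by (intro pdiff_mult) auto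
  next
    fix c
    have f: "Ck n f" "Ck n g" using Suc.prems Ck_down by blast+
    have "Ck n (\<lambda>q. pd c f q * g q + f q * pd c g q)"
      using Suc f by (intro Ck_add) simp_all
    then show "Ck n (pd c (\<lambda>q. f q * g q))"
      by (rule Ck_cong) (rule pd_mult[symmetric], use Suc.prems in auto)
  qed
qed

lemma Ck_sum: "finite I \<Longrightarrow> (\<And>i. i \<in> I \<Longrightarrow> Ck n (f i)) \<Longrightarrow> Ck n (\<lambda>q. \<Sum>i\<in>I. f i q)"
proof (induction I rule: finite_induct)
  case empty then show ?case using Ck_const by simp
next
  case (insert x F) then show ?case by (simp add: Ck_add)
qed

lemma deriv_invpow:
  fixes a b s :: real
  assumes "(g has_real_derivative s) (at b)" "g b \<noteq> 0"
  shows "((\<lambda>t. inverse ((g t) ^ m)) has_real_derivative - s * real m * inverse ((g b) ^ Suc m)) (at b)"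
proof -
  have i: "((\<lambda>t. inverse (g t)) has_real_derivative - (s * inverse (g b ^ Suc (Suc 0)))) (at b)"
    by (rule DERIV_inverse_fun[OF assms])
  have d2: "((\<lambda>t. (inverse (g t)) ^ m) has_real_derivative of_nat m * (- (s * inverse (g b ^ Suc (Suc 0))) * inverse (g b) ^ (m - Suc 0))) (at b)"
    by (rule DERIV_power[OF i])
  have eq: "of_nat m * (- (s * inverse (g b ^ Suc (Suc 0))) * inverse (g b) ^ (m - Suc 0)) = - s * real m * inverse ((g b) ^ Suc m)"
    by (cases m) (simp_all add: power_inverse field_simps, simp add: minus_divide_left)
  have e: "(\<lambda>t. (inverse (g t)) ^ m) = (\<lambda>t. inverse ((g t)^m))" by (simp add: power_inverse)
  show ?thesis using d2 unfolding e eq .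
qed

definition hpow :: "nat \<Rightarrow> pt \<Rightarrow> real" where
  "hpow m q = inverse ((q (CV 0) - q (CU 0)) ^ m)"

lemma has_hpow:
  assumes "p \<in> Dom"
  shows "((\<lambda>t. hpow m (p(c:=t))) has_real_derivative
     (if c = CU 0 then real m * hpow (Suc m) p else if c = CV 0 then - real m * hpow (Suc m) p else 0)) (at (p c))"
proof -
  have ne: "p (CV 0) - p (CU 0) \<noteq> 0" using assms by (simp add: Dom_def)
  consider "c = CU 0" | "c = CV 0" | "c \<noteq> CU 0" "c \<noteq> CV 0" by blast
  then show ?thesis
  proof cases
    case 1
    have d: "((\<lambda>t. p (CV 0) - t) has_real_derivative -1) (at (p (CU 0)))"
      by (auto intro!: derivative_eq_intros)
    have "((\<lambda>t. inverse ((p (CV 0) - t) ^ m)) has_real_derivative real m * inverse ((p (CV 0) - p (CU 0)) ^ Suc m)) (at (p (CU 0)))"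
      using deriv_invpow[OF d, of m] ne by simp
    then show ?thesis using 1 by (simp add: hpow_def)
  next
    case 2
    have d: "((\<lambda>t. t - p (CU 0)) has_real_derivative 1) (at (p (CV 0)))"
      by (auto intro!: derivative_eq_intros)
    have "((\<lambda>t. inverse ((t - p (CU 0)) ^ m)) has_real_derivative - real m * inverse ((p (CV 0) - p (CU 0)) ^ Suc m)) (at (p (CV 0)))"
      using deriv_invpow[OF d, of m] ne by simp
    then show ?thesis using 2 by (simp add: hpow_def)
  next
    case 3 then show ?thesis by (simp add: hpow_def)
  qed
qed

lemma Ck_hpow: "Ck n (hpow m)"
proof (induction n arbitrary: m)
  case 0 then show ?case by simp
next
  case (Suc n)
  show ?case unfolding Ck.simps
  proof (intro conjI allI ballI)
    fix c p assume "p \<in> Dom"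
    then show "pdiff c (hpow m) p" using has_hpow pdiffI by blast
  next
    fix c
    have "Ck n (\<lambda>q. (if c = CU 0 then real m else if c = CV 0 then - real m else 0) * hpow (Suc m) q)"
      by (intro Ck_mult Ck_const Suc.IH)
    then show "Ck n (pd c (hpow m))"
      by (rule Ck_cong) (drule has_hpow[of _ m c], drule pd_eqI, auto)
  qed
qed

lemma Fu_eq: "Fu = (\<lambda>q. hpow 1 q - q (CV 0) * q (CU 1))"
  by (rule ext) (simp add: Fu_def hpow_def inverse_eq_divide)
lemma Fv_eq: "Fv = (\<lambda>q. - hpow 1 q - q (CU 0) * q (CV 1))"
proof (rule ext)
  fix q :: pt
  have "1 / (q (CU 0) - q (CV 0)) = 1 / (- (q (CV 0) - q (CU 0)))" by simp
  also have "\<dots> = - (1 / (q (CV 0) - q (CU 0)))" by (rule divide_minus_right)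
  finally show "Fv q = - hpow 1 q - q (CU 0) * q (CV 1)" by (simp add: Fv_def hpow_def inverse_eq_divide)
qed

lemma Ck_Fu: "Ck n Fu" unfolding Fu_eq by (intro Ck_diff Ck_mult Ck_hpow Ck_coord)
lemma Ck_Fv: "Ck n Fv" unfolding Fv_eq by (intro Ck_diff Ck_minus Ck_mult Ck_hpow Ck_coord)

lemma Dx1_coef_eq: "Dx1_coef c = (case c of CX \<Rightarrow> (\<lambda>p. 1) | CY \<Rightarrow> (\<lambda>p. 0) | CU i \<Rightarrow> (\<lambda>p. p (CU (Suc i)))
      | CV i \<Rightarrow> (\<lambda>p. p (CV (Suc i))) | CPhi _ \<Rightarrow> (\<lambda>p. 0))"
  by (rule ext) (simp add: Dx1_coef_def split: coord.split)

lemma Ck_Dx1_coef: "Ck n (Dx1_coef c)"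
  unfolding Dx1_coef_eq by (simp add: Ck_const Ck_coord split: coord.split)

lemma Ck_Dx1: assumes "finite S" "depends_only g S" "Ck (Suc n) g" shows "Ck n (Dx1 g)"
proof -
  have "Dx1 g = (\<lambda>p. \<Sum>c\<in>S. Dx1_coef c p * pd c g p)" unfolding Dx1_def by (rule vf_fun[OF assms(1,2)])
  moreover have "Ck n (\<lambda>p. \<Sum>c\<in>S. Dx1_coef c p * pd c g p)"
    using assms(1,3) by (intro Ck_sum Ck_mult Ck_Dx1_coef) auto
  ultimately show ?thesis by simp
qed

definition Fset :: "nat \<Rightarrow> coord set" where
  "Fset i = CU ` {..Suc i} \<union> CV ` {..Suc i}"

lemma finite_Fset: "finite (Fset i)" by (simp add: Fset_def)

lemma Fset_mono: "i \<le> j \<Longrightarrow> Fset i \<subseteq> Fset j" by (auto simp: Fset_def)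

lemma depends_Dx1: assumes "depends_only g (Fset i)" shows "depends_only (Dx1 g) (Fset (Suc i))"
proof -
  have "Dx1 g = (\<lambda>p. \<Sum>c\<in>Fset i. Dx1_coef c p * pd c g p)" unfolding Dx1_def by (rule vf_fun[OF finite_Fset assms])
  moreover have "depends_only (\<lambda>p. \<Sum>c\<in>Fset i. Dx1_coef c p * pd c g p) (Fset (Suc i))"
  proof (intro depends_sum depends_mult)
    fix c assume "c \<in> Fset i"
    then show "depends_only (Dx1_coef c) (Fset (Suc i))"
      unfolding Dx1_coef_eq by (auto simp: Fset_def depends_const intro!: depends_coord)
    show "depends_only (pd c g) (Fset (Suc i))"
      by (rule depends_mono[OF depends_pd[OF assms]]) (simp add: Fset_mono)
  qed
  ultimately show ?thesis by simp
qed

lemma iter_props: assumes "depends_only g0 (Fset 0)" "\<And>n. Ck n g0"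
  shows "depends_only ((Dx1 ^^ i) g0) (Fset i) \<and> (\<forall>n. Ck n ((Dx1 ^^ i) g0))"
proof (induction i)
  case 0 then show ?case using assms by simp
next
  case (Suc i)
  have "Ck n (Dx1 ((Dx1 ^^ i) g0))" for n
    using Suc Ck_Dx1[OF finite_Fset[of i], of "(Dx1 ^^ i) g0" n] by blast
  then show ?case using Suc depends_Dx1 by auto
qed

lemma depends_Fu: "depends_only Fu (Fset 0)"
  unfolding depends_only_def
proof (intro allI impI)
  fix p q :: pt assume h: "\<forall>c\<in>Fset 0. p c = q c"
  have "p (CU 0) = q (CU 0)" "p (CV 0) = q (CV 0)" "p (CU 1) = q (CU 1)" using h by (auto simp: Fset_def)
  then show "Fu p = Fu q" by (simp add: Fu_def)
qed

lemma depends_Fv: "depends_only Fv (Fset 0)"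
  unfolding depends_only_def
proof (intro allI impI)
  fix p q :: pt assume h: "\<forall>c\<in>Fset 0. p c = q c"
  have "p (CU 0) = q (CU 0)" "p (CV 0) = q (CV 0)" "p (CV 1) = q (CV 1)" using h by (auto simp: Fset_def)
  then show "Fv p = Fv q" by (simp add: Fv_def)
qed


lemma dom_close:
  assumes "p \<in> Dom" "\<And>x. \<bar>q x - p x\<bar> < \<bar>p (CU 0) - p (CV 0)\<bar> / 2"
  shows "q \<in> Dom"
proof -
  have "\<bar>q (CU 0) - p (CU 0)\<bar> < \<bar>p (CU 0) - p (CV 0)\<bar> / 2" "\<bar>q (CV 0) - p (CV 0)\<bar> < \<bar>p (CU 0) - p (CV 0)\<bar> / 2"
    using assms(2) by auto
  then have "q (CU 0) \<noteq> q (CV 0)" by (auto simp: abs_if split: if_splits)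
  then show ?thesis by (simp add: Dom_def)
qed

lemma schwarz:
  assumes p: "p \<in> Dom" and cd: "c \<noteq> d"
  and fc: "\<And>q. q \<in> Dom \<Longrightarrow> pdiff c f q" and fd: "\<And>q. q \<in> Dom \<Longrightarrow> pdiff d f q"
  and fcd: "\<And>q. q \<in> Dom \<Longrightarrow> pdiff d (pd c f) q" and fdc: "\<And>q. q \<in> Dom \<Longrightarrow> pdiff c (pd d f) q"
  and cont1: "continuous_on Dom (pd d (pd c f))" and cont2: "continuous_on Dom (pd c (pd d f))"
  shows "pd d (pd c f) p = pd c (pd d f) p"
proof -
  define \<gamma> where "\<gamma> s t = p(c:=s, d:=t)" for s t
  define a where "a = p c"
  define b where "b = p d"
  define e0 where "e0 = \<bar>p (CU 0) - p (CV 0)\<bar> / 2"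
  have e0: "e0 > 0" using p by (simp add: e0_def Dom_def)
  have gapp: "\<gamma> s t x = (if x = d then t else if x = c then s else p x)" for s t x
    by (simp add: \<gamma>_def)
  have gc: "(\<gamma> s t)(c := s') = \<gamma> s' t" for s t s'
    using cd by (simp add: \<gamma>_def fun_upd_twist)
  have gd: "(\<gamma> s t)(d := t') = \<gamma> s t'" for s t t'
    by (simp add: \<gamma>_def)
  have gcv: "\<gamma> s t c = s" and gdv: "\<gamma> s t d = t" for s t using cd by (auto simp: \<gamma>_def)
  have gab: "\<gamma> a b = p" by (simp add: \<gamma>_def a_def b_def)
  have gdom: "\<gamma> s t \<in> Dom" if "\<bar>s - a\<bar> < e0" "\<bar>t - b\<bar> < e0" for s t
  proof (rule dom_close[OF p])
    fix x show "\<bar>\<gamma> s t x - p x\<bar> < \<bar>p (CU 0) - p (CV 0)\<bar> / 2"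
      using that e0 unfolding gapp e0_def[symmetric] a_def b_def by auto
  qed
  have Dc: "((\<lambda>s'. g (\<gamma> s' t)) has_real_derivative pd c g (\<gamma> s t)) (at s)"
    if "pdiff c g (\<gamma> s t)" for g s t
    using pd_has[OF that] unfolding gc gcv .
  have Dd: "((\<lambda>t'. g (\<gamma> s t')) has_real_derivative pd d g (\<gamma> s t)) (at t)"
    if "pdiff d g (\<gamma> s t)" for g s t
    using pd_has[OF that] unfolding gd gdv .
  define A where "A = pd d (pd c f)"
  define B where "B = pd c (pd d f)"
  have key: "\<exists>\<xi> \<eta> \<xi>' \<eta>'. a < \<xi> \<and> \<xi> < a + h \<and> b < \<eta> \<and> \<eta> < b + h \<and>
       a < \<xi>' \<and> \<xi>' < a + h \<and> b < \<eta>' \<and> \<eta>' < b + h \<and> A (\<gamma> \<xi> \<eta>) = B (\<gamma> \<xi>' \<eta>')"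
    if h: "0 < h" "h < e0" for h
  proof -
    define \<Delta> where "\<Delta> = f (\<gamma> (a+h) (b+h)) - f (\<gamma> (a+h) b) - f (\<gamma> a (b+h)) + f (\<gamma> a b)"
    have inA: "\<gamma> s t \<in> Dom" if "a \<le> s" "s \<le> a + h" "b \<le> t" "t \<le> b + h" for s t
      using that h by (intro gdom) auto
    obtain \<xi> where \<xi>: "a < \<xi>" "\<xi> < a + h"
      "(\<lambda>s. f (\<gamma> s (b+h)) - f (\<gamma> s b)) (a + h) - (\<lambda>s. f (\<gamma> s (b+h)) - f (\<gamma> s b)) a =
        (a + h - a) * (pd c f (\<gamma> \<xi> (b+h)) - pd c f (\<gamma> \<xi> b))"
    proof -
      have "\<exists>z. a < z \<and> z < a + h \<and> (\<lambda>s. f (\<gamma> s (b+h)) - f (\<gamma> s b)) (a + h) - (\<lambda>s. f (\<gamma> s (b+h)) - f (\<gamma> s b)) a =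
        (a + h - a) * (\<lambda>s. pd c f (\<gamma> s (b+h)) - pd c f (\<gamma> s b)) z"
        by (rule MVT2) (use h in \<open>auto intro!: DERIV_diff Dc fc inA\<close>)
      then show ?thesis using that by auto
    qed
    obtain \<eta> where \<eta>: "b < \<eta>" "\<eta> < b + h"
      "pd c f (\<gamma> \<xi> (b+h)) - pd c f (\<gamma> \<xi> b) = (b + h - b) * A (\<gamma> \<xi> \<eta>)"
    proof -
      have "\<exists>z. b < z \<and> z < b + h \<and> (\<lambda>t. pd c f (\<gamma> \<xi> t)) (b + h) - (\<lambda>t. pd c f (\<gamma> \<xi> t)) b =
        (b + h - b) * (\<lambda>t. A (\<gamma> \<xi> t)) z"
        by (rule MVT2) (use h \<xi> in \<open>auto simp: A_def intro!: Dd fcd inA\<close>)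
      then show ?thesis using that by auto
    qed
    obtain \<eta>' where \<eta>': "b < \<eta>'" "\<eta>' < b + h"
      "(\<lambda>t. f (\<gamma> (a+h) t) - f (\<gamma> a t)) (b + h) - (\<lambda>t. f (\<gamma> (a+h) t) - f (\<gamma> a t)) b =
        (b + h - b) * (pd d f (\<gamma> (a+h) \<eta>') - pd d f (\<gamma> a \<eta>'))"
    proof -
      have "\<exists>z. b < z \<and> z < b + h \<and> (\<lambda>t. f (\<gamma> (a+h) t) - f (\<gamma> a t)) (b + h) - (\<lambda>t. f (\<gamma> (a+h) t) - f (\<gamma> a t)) b =
        (b + h - b) * (\<lambda>t. pd d f (\<gamma> (a+h) t) - pd d f (\<gamma> a t)) z"
        by (rule MVT2) (use h in \<open>auto intro!: DERIV_diff Dd fd inA\<close>)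
      then show ?thesis using that by auto
    qed
    obtain \<xi>' where \<xi>': "a < \<xi>'" "\<xi>' < a + h"
      "pd d f (\<gamma> (a+h) \<eta>') - pd d f (\<gamma> a \<eta>') = (a + h - a) * B (\<gamma> \<xi>' \<eta>')"
    proof -
      have "\<exists>z. a < z \<and> z < a + h \<and> (\<lambda>s. pd d f (\<gamma> s \<eta>')) (a + h) - (\<lambda>s. pd d f (\<gamma> s \<eta>')) a =
        (a + h - a) * (\<lambda>s. B (\<gamma> s \<eta>')) z"
        by (rule MVT2) (use h \<eta>' in \<open>auto simp: B_def intro!: Dc fdc inA\<close>)
      then show ?thesis using that by auto
    qed
    have "\<Delta> = h * (h * A (\<gamma> \<xi> \<eta>))" using \<xi>(3) \<eta>(3) unfolding \<Delta>_def by simp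
    moreover have "\<Delta> = h * (h * B (\<gamma> \<xi>' \<eta>'))" using \<xi>'(3) \<eta>'(3) unfolding \<Delta>_def by simp
    ultimately have "A (\<gamma> \<xi> \<eta>) = B (\<gamma> \<xi>' \<eta>')" using h by simp
    then show ?thesis using \<xi> \<eta> \<xi>' \<eta>' by blast
  qed
  define hs where "hs n = e0 / (real n + 2)" for n :: nat
  have hs: "0 < hs n" "hs n < e0" for n
  proof -
    have d: "(1::real) < real n + 2" by simp
    show "0 < hs n" using e0 by (simp add: hs_def)
    have "e0 / (real n + 2) < e0 / 1" by (rule divide_strict_left_mono[OF d e0]) simp
    then show "hs n < e0" by (simp add: hs_def)
  qed
  have hs0: "hs \<longlonglongrightarrow> 0" unfolding hs_def
    by real_asymp
  have "\<forall>n. \<exists>z. a < fst z \<and> fst z < a + hs n \<and> b < fst (snd z) \<and> fst (snd z) < b + hs n \<and>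
       a < fst (snd (snd z)) \<and> fst (snd (snd z)) < a + hs n \<and> b < snd (snd (snd z)) \<and> snd (snd (snd z)) < b + hs n \<and>
       A (\<gamma> (fst z) (fst (snd z))) = B (\<gamma> (fst (snd (snd z))) (snd (snd (snd z))))"
    using key[OF hs] by fastforce
  then obtain Z where Z: "\<And>n. a < fst (Z n) \<and> fst (Z n) < a + hs n \<and> b < fst (snd (Z n)) \<and> fst (snd (Z n)) < b + hs n \<and>
       a < fst (snd (snd (Z n))) \<and> fst (snd (snd (Z n))) < a + hs n \<and> b < snd (snd (snd (Z n))) \<and> snd (snd (snd (Z n))) < b + hs n \<and>
       A (\<gamma> (fst (Z n)) (fst (snd (Z n)))) = B (\<gamma> (fst (snd (snd (Z n)))) (snd (snd (snd (Z n)))))"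
    by metis
  have sq: "(\<lambda>n. x n) \<longlonglongrightarrow> a0" if "\<And>n. a0 < x n \<and> x n < a0 + hs n" for x a0
  proof (rule tendsto_sandwich[of "\<lambda>n. a0" _ _ "\<lambda>n. a0 + hs n"])
    show "\<forall>\<^sub>F n in sequentially. a0 \<le> x n" by (rule always_eventually) (use that less_imp_le in blast)
    show "\<forall>\<^sub>F n in sequentially. x n \<le> a0 + hs n" by (rule always_eventually) (use that less_imp_le in blast)
    show "(\<lambda>n. a0 + hs n) \<longlonglongrightarrow> a0" using tendsto_add[OF tendsto_const hs0] by simp
  qed simp
  have gcont: "continuous_on UNIV (\<lambda>z::real\<times>real. \<gamma> (fst z) (snd z))"
    unfolding gapp apply (intro continuous_on_coordinatewise_then_product)
    subgoal for i by (cases "i = d"; cases "i = c") (auto intro!: continuous_intros)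
    done
  have glim: "(\<lambda>n. \<gamma> (x n) (y n)) \<longlonglongrightarrow> p"
    if "\<And>n. a < x n \<and> x n < a + hs n" "\<And>n. b < y n \<and> y n < b + hs n" for x y
  proof -
    have "(\<lambda>n. (x n, y n)) \<longlonglongrightarrow> (a, b)" by (intro tendsto_Pair sq that)
    from continuous_on_tendsto_compose[OF gcont this] show ?thesis by (simp add: gab)
  qed
  have gin: "\<gamma> (x n) (y n) \<in> Dom"
    if "\<And>n. a < x n \<and> x n < a + hs n" "\<And>n. b < y n \<and> y n < b + hs n" for x y n
  proof (rule gdom)
    show "\<bar>x n - a\<bar> < e0" using that(1)[of n] hs[of n] by auto
    show "\<bar>y n - b\<bar> < e0" using that(2)[of n] hs[of n] by auto
  qed
  have l1: "(\<lambda>n. A (\<gamma> (fst (Z n)) (fst (snd (Z n))))) \<longlonglongrightarrow> A p"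
    by (rule continuous_on_tendsto_compose[OF cont1[folded A_def] glim p])
       (use Z in \<open>auto intro!: always_eventually gin\<close>)
  have l2: "(\<lambda>n. B (\<gamma> (fst (snd (snd (Z n)))) (snd (snd (snd (Z n)))))) \<longlonglongrightarrow> B p"
    by (rule continuous_on_tendsto_compose[OF cont2[folded B_def] glim p])
       (use Z in \<open>auto intro!: always_eventually gin\<close>)
  have "(\<lambda>n. A (\<gamma> (fst (Z n)) (fst (snd (Z n))))) = (\<lambda>n. B (\<gamma> (fst (snd (snd (Z n)))) (snd (snd (snd (Z n))))))"
    using Z by auto
  with l1 l2 have "A p = B p" using LIMSEQ_unique by metis
  then show ?thesis by (simp add: A_def B_def)
qed


lemma commutator:
  fixes X Y :: "coord \<Rightarrow> pt \<Rightarrow> real"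
  assumes p: "p \<in> Dom" and S: "finite S" and T: "finite T" "S \<subseteq> T"
  and fdep: "depends_only f S"
  and fdiff: "\<And>c. pdiff c f p"
  and f2: "\<And>c d. pdiff d (pd c f) p"
  and sym: "\<And>c d. c \<in> S \<Longrightarrow> d \<in> S \<Longrightarrow> pd d (pd c f) p = pd c (pd d f) p"
  and Xdep: "\<And>c. c \<in> S \<Longrightarrow> depends_only (X c) T"
  and Ydep: "\<And>c. c \<in> S \<Longrightarrow> depends_only (Y c) T"
  and Xdiff: "\<And>c d. c \<in> S \<Longrightarrow> pdiff d (X c) p"
  and Ydiff: "\<And>c d. c \<in> S \<Longrightarrow> pdiff d (Y c) p"
  shows "vf X (vf Y f) p - vf Y (vf X f) p = (\<Sum>c\<in>S. (vf X (Y c) p - vf Y (X c) p) * pd c f p)"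
proof -
  have fT: "depends_only f T" using depends_mono[OF fdep T(2)] .
  have pdS: "depends_only (pd c f) T" for c using depends_pd[OF fT] .
  have eY: "vf Y f = (\<lambda>q. \<Sum>c\<in>S. Y c q * pd c f q)" by (rule vf_fun[OF S fdep])
  have eX: "vf X f = (\<lambda>q. \<Sum>c\<in>S. X c q * pd c f q)" by (rule vf_fun[OF S fdep])
  have depY: "depends_only (vf Y f) T" unfolding eY
    by (intro depends_sum depends_mult Ydep pdS) 
  have depX: "depends_only (vf X f) T" unfolding eX
    by (intro depends_sum depends_mult Xdep pdS)
  have pdY: "pd d (vf Y f) p = (\<Sum>c\<in>S. pd d (Y c) p * pd c f p + Y c p * pd d (pd c f) p)" for d
    unfolding eY by (subst pd_sum[OF S]) (auto intro!: pdiff_mult Ydiff f2 pd_mult sum.cong)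
  have pdX: "pd d (vf X f) p = (\<Sum>c\<in>S. pd d (X c) p * pd c f p + X c p * pd d (pd c f) p)" for d
    unfolding eX by (subst pd_sum[OF S]) (auto intro!: pdiff_mult Xdiff f2 pd_mult sum.cong)
  define A1 where "A1 = (\<Sum>d\<in>T. \<Sum>c\<in>S. X d p * pd d (Y c) p * pd c f p)"
  define A2 where "A2 = (\<Sum>d\<in>T. \<Sum>c\<in>S. X d p * Y c p * pd d (pd c f) p)"
  define B1 where "B1 = (\<Sum>d\<in>T. \<Sum>c\<in>S. Y d p * pd d (X c) p * pd c f p)"
  define B2 where "B2 = (\<Sum>d\<in>T. \<Sum>c\<in>S. Y d p * X c p * pd d (pd c f) p)"
  have L: "vf X (vf Y f) p = A1 + A2"
    unfolding vf_finite[OF T(1) depY] pdY A1_def A2_def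
    by (simp add: sum_distrib_left distrib_left sum.distrib mult.assoc)
  have R: "vf Y (vf X f) p = B1 + B2"
    unfolding vf_finite[OF T(1) depX] pdX B1_def B2_def
    by (simp add: sum_distrib_left distrib_left sum.distrib mult.assoc)
  have A2S: "A2 = (\<Sum>d\<in>S. \<Sum>c\<in>S. X d p * Y c p * pd d (pd c f) p)"
    unfolding A2_def
    by (rule sum.mono_neutral_right[OF T(1) T(2)]) (auto simp: pd_notin[OF depends_pd[OF fdep]])
  have B2S: "B2 = (\<Sum>d\<in>S. \<Sum>c\<in>S. Y d p * X c p * pd d (pd c f) p)"
    unfolding B2_def
    by (rule sum.mono_neutral_right[OF T(1) T(2)]) (auto simp: pd_notin[OF depends_pd[OF fdep]])
  have "B2 = (\<Sum>c\<in>S. \<Sum>d\<in>S. Y d p * X c p * pd d (pd c f) p)" unfolding B2S by (rule sum.swap)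
  also have "\<dots> = (\<Sum>c\<in>S. \<Sum>d\<in>S. X c p * Y d p * pd c (pd d f) p)"
    by (intro sum.cong refl) (simp add: sym)
  finally have A2B2: "A2 = B2" unfolding A2S by simp
  have RHS: "(\<Sum>c\<in>S. (vf X (Y c) p - vf Y (X c) p) * pd c f p) = A1 - B1"
  proof -
    have "(\<Sum>c\<in>S. (vf X (Y c) p - vf Y (X c) p) * pd c f p) =
      (\<Sum>c\<in>S. \<Sum>d\<in>T. X d p * pd d (Y c) p * pd c f p) - (\<Sum>c\<in>S. \<Sum>d\<in>T. Y d p * pd d (X c) p * pd c f p)"
      by (simp add: vf_finite[OF T(1) Ydep] vf_finite[OF T(1) Xdep] sum_distrib_right left_diff_distrib sum_subtractf)
    also have "\<dots> = A1 - B1" unfolding A1_def B1_def by (simp add: sum.swap[of _ S])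
    finally show ?thesis .
  qed
  show ?thesis using L R A2B2 RHS by simp
qed


no_notation vec_nth (infixl \<open>$\<close> 90)
unbundle fps_syntax

definition D1 :: "(pt \<Rightarrow> real) \<Rightarrow> bool" where "D1 g = (\<forall>c p. pdiff c g p)"

lemma D1_const: "D1 (\<lambda>q. a)" by (simp add: D1_def)
lemma D1_coord: "D1 (\<lambda>q. q d)" by (simp add: D1_def)
lemma D1_add: "D1 f \<Longrightarrow> D1 g \<Longrightarrow> D1 (\<lambda>q. f q + g q)" by (simp add: D1_def pdiff_add)
lemma D1_diff: "D1 f \<Longrightarrow> D1 g \<Longrightarrow> D1 (\<lambda>q. f q - g q)" by (simp add: D1_def pdiff_diff)
lemma D1_minus: "D1 f \<Longrightarrow> D1 (\<lambda>q. - f q)" by (simp add: D1_def pdiff_minus)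
lemma D1_mult: "D1 f \<Longrightarrow> D1 g \<Longrightarrow> D1 (\<lambda>q. f q * g q)" by (simp add: D1_def pdiff_mult)
lemma D1_sum: "finite I \<Longrightarrow> (\<And>i. i \<in> I \<Longrightarrow> D1 (f i)) \<Longrightarrow> D1 (\<lambda>q. \<Sum>i\<in>I. f i q)"
  by (simp add: D1_def pdiff_sum)
lemma D1_sum': "(\<And>i. i \<in> I \<Longrightarrow> D1 (f i)) \<Longrightarrow> D1 (\<lambda>q. \<Sum>i\<in>I. f i q)"
  by (cases "finite I") (auto intro: D1_sum D1_const)

definition SD :: "(pt \<Rightarrow> real fps) \<Rightarrow> bool" where "SD F = (\<forall>n. D1 (\<lambda>q. F q $ n))"

lemma SD_fconst: assumes "D1 a" shows "SD (\<lambda>q. fps_const (a q))"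
  unfolding SD_def
proof
  fix n show "D1 (\<lambda>q. fps_const (a q) $ n)" by (cases "n = 0") (simp_all add: assms D1_const)
qed
lemma SD_const: "SD (\<lambda>q. c)" unfolding SD_def by (simp add: D1_const)
lemma SD_add: "SD F \<Longrightarrow> SD G \<Longrightarrow> SD (\<lambda>q. F q + G q)" unfolding SD_def by (simp add: D1_add)
lemma SD_diff: "SD F \<Longrightarrow> SD G \<Longrightarrow> SD (\<lambda>q. F q - G q)" unfolding SD_def by (simp add: D1_diff)
lemma SD_minus: "SD F \<Longrightarrow> SD (\<lambda>q. - F q)" unfolding SD_def by (simp add: D1_minus)
lemma SD_mult: "SD F \<Longrightarrow> SD G \<Longrightarrow> SD (\<lambda>q. F q * G q)"
  unfolding SD_def fps_mult_nth by (auto intro!: D1_sum D1_mult)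

lemma lphi_nth: "lphi p $ n = (if n = 0 then 1 else if n = 1 then 0
      else if n = 2 then - p CY else if n = 3 then - p CX else p (CPhi (n - 1)))"
  by (simp add: lphi_def)

lemma SD_lphi: "SD lphi"
  unfolding SD_def
proof
  fix n :: nat
  consider "n = 0" | "n = 1" | "n = 2" | "n = 3" | "n \<ge> 4" by linarith
  then show "D1 (\<lambda>q. lphi q $ n)"
  proof cases
    case 1 then show ?thesis by (simp add: lphi_nth D1_const)
  next
    case 2 then show ?thesis by (simp add: lphi_nth D1_const)
  next
    case 3 then show ?thesis by (simp add: lphi_nth D1_minus D1_coord)
  next
    case 4 then show ?thesis by (simp add: lphi_nth D1_minus D1_coord)
  next
    case 5 then show ?thesis by (simp add: lphi_nth D1_coord)
  qed
qed

lemma inv_nth_rec: assumes "f $ 0 = (1::real)"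
  shows "inverse f $ n = (if n = 0 then 1 else - (\<Sum>i=1..n. f $ i * inverse f $ (n - i)))"
proof (cases n)
  case 0 then show ?thesis using assms by (simp add: fps_inverse_def)
next
  case (Suc m) then show ?thesis using assms by (simp add: fps_inverse_def)
qed

lemma SD_inverse: assumes "SD F" "\<And>q. F q $ 0 = 1" shows "SD (\<lambda>q. inverse (F q))"
  unfolding SD_def
proof
  fix n show "D1 (\<lambda>q. inverse (F q) $ n)"
  proof (induction n rule: less_induct)
    case (less n)
    show ?case
    proof (cases "n = 0")
      case True
      have "(\<lambda>q. inverse (F q) $ n) = (\<lambda>q. 1)" using True by (simp add: assms(2))
      then show ?thesis by (simp add: D1_const)
    next
      case False
      have e: "(\<lambda>q. inverse (F q) $ n) = (\<lambda>q. - (\<Sum>i=1..n. F q $ i * inverse (F q) $ (n - i)))"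
        using inv_nth_rec[OF assms(2)] False by simp
      have "D1 (\<lambda>q. F q $ i * inverse (F q) $ (n - i))" if "i \<in> {1..n}" for i
      proof (rule D1_mult)
        show "D1 (\<lambda>q. F q $ i)" using assms(1) unfolding SD_def by blast
        show "D1 (\<lambda>q. inverse (F q) $ (n - i))" using that False by (intro less) auto
      qed
      then have "D1 (\<lambda>q. - (\<Sum>i=1..n. F q $ i * inverse (F q) $ (n - i)))"
        by (intro D1_minus D1_sum) auto
      then show ?thesis unfolding e .
    qed
  qed
qed

definition eqto :: "nat \<Rightarrow> real fps \<Rightarrow> real fps \<Rightarrow> bool" where
  "eqto j F G = (\<forall>n\<le>j. F $ n = G $ n)"

lemma eqto_refl: "eqto j F F" by (simp add: eqto_def)
lemma eqto_sym: "eqto j F G \<Longrightarrow> eqto j G F" by (simp add: eqto_def)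
lemma eqto_trans: "eqto j F G \<Longrightarrow> eqto j G H \<Longrightarrow> eqto j F H" by (simp add: eqto_def)
lemma eqto_add: "eqto j F G \<Longrightarrow> eqto j F' G' \<Longrightarrow> eqto j (F + F') (G + G')" by (simp add: eqto_def)
lemma eqto_diff: "eqto j F G \<Longrightarrow> eqto j F' G' \<Longrightarrow> eqto j (F - F') (G - G')" by (simp add: eqto_def)
lemma eqto_minus: "eqto j F G \<Longrightarrow> eqto j (- F) (- G)" by (simp add: eqto_def)
lemma eqto_mult: "eqto j F G \<Longrightarrow> eqto j F' G' \<Longrightarrow> eqto j (F * F') (G * G')"
  unfolding eqto_def fps_mult_nth by (auto intro!: sum.cong)
lemma eqto_eq: "F = G \<Longrightarrow> eqto j F G" by (simp add: eqto_def)

lemma eqto_inverse: assumes "eqto j F G" "F $ 0 \<noteq> 0" shows "eqto j (inverse F) (inverse G)"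
proof -
  have G0: "G $ 0 \<noteq> 0" using assms by (simp add: eqto_def)
  have "inverse F = inverse F * (G * inverse G)" using inverse_mult_eq_1'[OF G0] by simp
  also have "\<dots> = (inverse F * G) * inverse G" by (simp add: mult.assoc)
  finally have e: "inverse F = (inverse F * G) * inverse G" .
  have "eqto j ((inverse F * G) * inverse G) ((inverse F * F) * inverse G)"
    by (intro eqto_mult eqto_refl eqto_sym[OF assms(1)])
  then show ?thesis using inverse_mult_eq_1[OF assms(2)] e by simp
qed

lemma eqto_cancel: assumes "eqto j (Q * E) 0" "Q $ 0 \<noteq> 0" shows "eqto j E 0"
proof -
  have iq: "inverse Q * Q = 1" using inverse_mult_eq_1[OF assms(2)] .
  have "E = (inverse Q * Q) * E" unfolding iq by simp
  also have "\<dots> = inverse Q * (Q * E)" by (rule mult.assoc)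
  finally have "E = inverse Q * (Q * E)" .
  moreover have "eqto j (inverse Q * (Q * E)) (inverse Q * 0)" by (intro eqto_mult eqto_refl assms(1))
  ultimately show ?thesis by (metis mult_zero_right)
qed

definition Aser :: "pt \<Rightarrow> real fps" where "Aser p = lphi p - fps_const (p (CU 0)) * fps_X"
definition Bser :: "pt \<Rightarrow> real fps" where "Bser p = lphi p - fps_const (p (CV 0)) * fps_X"
definition Rser :: "pt \<Rightarrow> real fps" where
  "Rser p = fps_const (p (CU 0) + p (CV 0)) * fps_X ^ 2 - fps_X * lphi p"

lemma Qser_AB: "Qser p = Aser p * Bser p" by (simp add: Qser_def Aser_def Bser_def)

lemma Q0: "Qser p $ 0 = 1" by (simp add: Qser_def lphi_nth)

lemma QinvQ: "Qser p * inverse (Qser p) = 1" using inverse_mult_eq_1'[of "Qser p"] Q0 by simp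
lemma invQQ: "inverse (Qser p) * Qser p = 1" using inverse_mult_eq_1[of "Qser p"] Q0 by simp

lemma Q_cancel: assumes "Qser p * F = G" shows "F = G * inverse (Qser p)"
proof -
  have "F = (inverse (Qser p) * Qser p) * F" by (simp add: invQQ)
  also have "\<dots> = inverse (Qser p) * (Qser p * F)" by (rule mult.assoc)
  also have "\<dots> = G * inverse (Qser p)" using assms by (simp only: mult.commute)
  finally show ?thesis .
qed

lemma Q_mult: "Qser p * (G * inverse (Qser p)) = G"
proof -
  have "Qser p * (G * inverse (Qser p)) = G * (Qser p * inverse (Qser p))" by (rule mult.left_commute)
  then show ?thesis by (simp add: QinvQ)
qed

lemma Xser_eq: "Xser p = - (fps_X ^ 2) * inverse (Qser p)"
  unfolding Xser_def
proof (rule the_equality)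
  show "Qser p * (- (fps_X ^ 2) * inverse (Qser p)) = - (fps_X ^ 2)" by (rule Q_mult)
next
  fix F assume "Qser p * F = - (fps_X ^ 2)"
  then show "F = - (fps_X ^ 2) * inverse (Qser p)" by (rule Q_cancel)
qed

lemma Yser_eq: "Yser p = Rser p * inverse (Qser p)"
  unfolding Yser_def
proof (rule the_equality)
  show "Qser p * (Rser p * inverse (Qser p)) = fps_const (p (CU 0) + p (CV 0)) * fps_X ^ 2 - fps_X * lphi p"
    unfolding Q_mult by (simp add: Rser_def)
next
  fix F assume "Qser p * F = fps_const (p (CU 0) + p (CV 0)) * fps_X ^ 2 - fps_X * lphi p"
  then show "F = Rser p * inverse (Qser p)" unfolding Rser_def[symmetric] by (rule Q_cancel)
qed

lemma QX: "Qser p * Xser p = - (fps_X ^ 2)"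
  unfolding Xser_eq by (rule Q_mult)
lemma QY: "Qser p * Yser p = Rser p"
  unfolding Yser_eq by (rule Q_mult)

lemma SD_A: "SD Aser" unfolding Aser_def[abs_def]
  by (intro SD_diff SD_mult SD_lphi SD_fconst SD_const D1_coord)
lemma SD_B: "SD Bser" unfolding Bser_def[abs_def]
  by (intro SD_diff SD_mult SD_lphi SD_fconst SD_const D1_coord)
lemma SD_Q: "SD Qser" unfolding Qser_AB[abs_def] by (intro SD_mult SD_A SD_B)
lemma SD_R: "SD Rser" unfolding Rser_def[abs_def]
  by (intro SD_diff SD_mult SD_lphi SD_fconst SD_const D1_coord D1_add)
lemma SD_I: "SD (\<lambda>q. inverse (Qser q))" by (intro SD_inverse SD_Q Q0)
lemma SD_X: "SD Xser" unfolding Xser_eq[abs_def] by (intro SD_mult SD_const SD_I)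
lemma SD_Y: "SD Yser" unfolding Yser_eq[abs_def] by (intro SD_mult SD_R SD_I)

lemma D1_Xbar: "D1 (Xbar j)" using SD_X unfolding SD_def Xbar_def[abs_def] by blast
lemma D1_Ybar: "D1 (Ybar j)" using SD_Y unfolding SD_def Ybar_def[abs_def] by blast

definition Dp :: "nat \<Rightarrow> coord set" where
  "Dp j = {CX, CY, CU 0, CV 0} \<union> CPhi ` {3..<j}"

lemma finite_Dp: "finite (Dp j)" by (simp add: Dp_def)

lemma eqto_lphi: assumes "\<forall>c\<in>Dp j. p c = q c" shows "eqto j (lphi p) (lphi q)"
  unfolding eqto_def
proof (intro allI impI)
  fix n assume n: "n \<le> j"
  have "p (CPhi (n - 1)) = q (CPhi (n - 1))" if "n \<ge> 4"
  proof -
    have "n - 1 \<in> {3..<j}" using n that by auto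
    then have "CPhi (n - 1) \<in> Dp j" unfolding Dp_def by blast
    then show ?thesis using assms by blast
  qed
  moreover have "p CX = q CX" "p CY = q CY" using assms by (auto simp: Dp_def)
  ultimately show "lphi p $ n = lphi q $ n" unfolding lphi_nth by auto
qed

lemma eqto_Q: assumes "\<forall>c\<in>Dp j. p c = q c" shows "eqto j (Qser p) (Qser q)"
proof -
  have "p (CU 0) = q (CU 0)" "p (CV 0) = q (CV 0)" using assms by (auto simp: Dp_def)
  then show ?thesis unfolding Qser_def by (intro eqto_mult eqto_diff eqto_lphi[OF assms] eqto_eq) auto
qed

lemma eqto_X: assumes "\<forall>c\<in>Dp j. p c = q c" shows "eqto j (Xser p) (Xser q)"
  unfolding Xser_eq by (intro eqto_mult eqto_refl eqto_inverse eqto_Q[OF assms]) (simp add: Q0)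

lemma eqto_Y: assumes "\<forall>c\<in>Dp j. p c = q c" shows "eqto j (Yser p) (Yser q)"
proof -
  have "p (CU 0) = q (CU 0)" "p (CV 0) = q (CV 0)" using assms by (auto simp: Dp_def)
  then have "eqto j (Rser p) (Rser q)" unfolding Rser_def
    by (intro eqto_mult eqto_diff eqto_lphi[OF assms] eqto_eq) auto
  then show ?thesis unfolding Yser_eq by (intro eqto_mult eqto_inverse eqto_Q[OF assms]) (simp_all add: Q0)
qed

lemma depends_Xbar: assumes "n \<le> j" shows "depends_only (Xbar n) (Dp j)"
  unfolding depends_only_def Xbar_def
proof (intro allI impI)
  fix p q :: pt assume "\<forall>c\<in>Dp j. p c = q c"
  from eqto_X[OF this] assms show "Xser p $ n = Xser q $ n" unfolding eqto_def by blast
qed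
lemma depends_Ybar: assumes "n \<le> j" shows "depends_only (Ybar n) (Dp j)"
  unfolding depends_only_def Ybar_def
proof (intro allI impI)
  fix p q :: pt assume "\<forall>c\<in>Dp j. p c = q c"
  from eqto_Y[OF this] assms show "Yser p $ n = Yser q $ n" unfolding eqto_def by blast
qed



definition sdr :: "coord \<Rightarrow> (pt \<Rightarrow> real fps) \<Rightarrow> pt \<Rightarrow> real fps" where
  "sdr d F p = Abs_fps (\<lambda>n. pd d (\<lambda>q. F q $ n) p)"

lemma sdr_nth[simp]: "sdr d F p $ n = pd d (\<lambda>q. F q $ n) p" by (simp add: sdr_def)

lemma SD_pdiff: "SD F \<Longrightarrow> pdiff d (\<lambda>q. F q $ n) p" unfolding SD_def D1_def by blast

lemma sdr_mult: assumes "SD F" "SD G"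
  shows "sdr d (\<lambda>q. F q * G q) p = sdr d F p * G p + F p * sdr d G p"
proof (rule fps_ext)
  fix n
  have "sdr d (\<lambda>q. F q * G q) p $ n = pd d (\<lambda>q. \<Sum>i=0..n. F q $ i * G q $ (n - i)) p"
    by (simp add: fps_mult_nth)
  also have "\<dots> = (\<Sum>i=0..n. pd d (\<lambda>q. F q $ i * G q $ (n - i)) p)"
    by (rule pd_sum) (auto intro!: pdiff_mult SD_pdiff assms)
  also have "\<dots> = (\<Sum>i=0..n. pd d (\<lambda>q. F q $ i) p * G p $ (n - i) + F p $ i * pd d (\<lambda>q. G q $ (n - i)) p)"
    by (intro sum.cong refl pd_mult SD_pdiff assms)
  also have "\<dots> = (sdr d F p * G p + F p * sdr d G p) $ n"
    by (simp add: fps_mult_nth sum.distrib)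
  finally show "sdr d (\<lambda>q. F q * G q) p $ n = (sdr d F p * G p + F p * sdr d G p) $ n" .
qed

lemma sdr_add: "SD F \<Longrightarrow> SD G \<Longrightarrow> sdr d (\<lambda>q. F q + G q) p = sdr d F p + sdr d G p"
  by (rule fps_ext) (simp add: pd_add SD_pdiff)
lemma sdr_diff: "SD F \<Longrightarrow> SD G \<Longrightarrow> sdr d (\<lambda>q. F q - G q) p = sdr d F p - sdr d G p"
  by (rule fps_ext) (simp add: pd_diff SD_pdiff)
lemma sdr_minus: "SD F \<Longrightarrow> sdr d (\<lambda>q. - F q) p = - sdr d F p"
  by (rule fps_ext) (simp add: pd_minus SD_pdiff)
lemma sdr_const: "sdr d (\<lambda>q. c) p = 0"
  by (rule fps_ext) simp
lemma sdr_fconst: "sdr d (\<lambda>q. fps_const (a q)) p = fps_const (pd d a p)"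
proof (rule fps_ext)
  fix n show "sdr d (\<lambda>q. fps_const (a q)) p $ n = fps_const (pd d a p) $ n"
    by (cases "n = 0") simp_all
qed

definition opD :: "(coord \<Rightarrow> real) \<Rightarrow> coord set \<Rightarrow> (pt \<Rightarrow> real fps) \<Rightarrow> pt \<Rightarrow> real fps" where
  "opD w T F p = (\<Sum>d\<in>T. fps_const (w d) * sdr d F p)"

lemma opD_nth: "opD w T F p $ n = (\<Sum>d\<in>T. w d * pd d (\<lambda>q. F q $ n) p)"
  by (simp add: opD_def fps_sum_nth)

lemma opD_mult: assumes "SD F" "SD G"
  shows "opD w T (\<lambda>q. F q * G q) p = opD w T F p * G p + F p * opD w T G p"
  unfolding opD_def sdr_mult[OF assms]
  by (simp add: distrib_left sum.distrib sum_distrib_right sum_distrib_left mult.assoc mult.left_commute)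

lemma opD_add: "SD F \<Longrightarrow> SD G \<Longrightarrow> opD w T (\<lambda>q. F q + G q) p = opD w T F p + opD w T G p"
  unfolding opD_def by (simp add: sdr_add distrib_left sum.distrib)
lemma opD_diff: "SD F \<Longrightarrow> SD G \<Longrightarrow> opD w T (\<lambda>q. F q - G q) p = opD w T F p - opD w T G p"
  unfolding opD_def by (simp add: sdr_diff right_diff_distrib sum_subtractf)
lemma opD_minus: "SD F \<Longrightarrow> opD w T (\<lambda>q. - F q) p = - opD w T F p"
  unfolding opD_def by (simp add: sdr_minus sum_negf)
lemma opD_const: "opD w T (\<lambda>q. c) p = 0"
  unfolding opD_def by (simp add: sdr_const)

lemma opD_coord: assumes "finite T"
  shows "opD w T (\<lambda>q. fps_const (q c)) p = fps_const (if c \<in> T then w c else 0)"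
proof (rule fps_ext)
  fix n
  have "(\<Sum>d\<in>T. w d * pd d (\<lambda>q. q c) p) = (\<Sum>d\<in>T. if d = c then w d else 0)"
    by (intro sum.cong) auto
  also have "\<dots> = (if c \<in> T then w c else 0)" using sum.delta[OF assms, of c w] by simp
  finally have e: "(\<Sum>d\<in>T. w d * pd d (\<lambda>q. q c) p) = (if c \<in> T then w c else 0)" .
  show "opD w T (\<lambda>q. fps_const (q c)) p $ n = fps_const (if c \<in> T then w c else 0) $ n"
  proof (cases "n = 0")
    case True then show ?thesis unfolding opD_nth using e by simp
  next
    case False then show ?thesis unfolding opD_nth by simp
  qed
qed

lemma SD_coordc: "SD (\<lambda>q. fps_const (q c))" by (intro SD_fconst D1_coord)

lemma sum_delta_mult: fixes w :: "coord \<Rightarrow> real"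
  shows "finite T \<Longrightarrow> (\<Sum>d\<in>T. w d * (if d = c then a else 0)) = (if c \<in> T then w c * a else 0)"
proof -
  assume f: "finite T"
  have "(\<Sum>d\<in>T. w d * (if d = c then a else 0)) = (\<Sum>d\<in>T. if d = c then w d * a else 0)"
    by (intro sum.cong) auto
  also have "\<dots> = (if c \<in> T then w c * a else 0)" using sum.delta[OF f, of c "\<lambda>d. w d * a"] by simp
  finally show ?thesis .
qed

definition phicoef :: "(coord \<Rightarrow> real) \<Rightarrow> nat \<Rightarrow> real" where
  "phicoef w n = (if n = 0 \<or> n = 1 then 0 else if n = 2 then - w CY else if n = 3 then - w CX else w (CPhi (n - 1)))"

lemma opD_lphi_nth: assumes "n \<le> j"
  shows "opD w (Dp j) lphi p $ n = phicoef w n"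
proof -
  have f: "finite (Dp j)" by (rule finite_Dp)
  have CX: "CX \<in> Dp j" and CY: "CY \<in> Dp j" by (auto simp: Dp_def)
  consider "n = 0" | "n = 1" | "n = 2" | "n = 3" | "n \<ge> 4" by linarith
  then show ?thesis
  proof cases
    case 1 then show ?thesis by (simp add: opD_nth lphi_nth phicoef_def)
  next
    case 2 then show ?thesis by (simp add: opD_nth lphi_nth phicoef_def)
  next
    case 3 then show ?thesis
      by (simp add: opD_nth lphi_nth phicoef_def pd_minus sum_delta_mult[OF f] CY sum_negf)
  next
    case 4 then show ?thesis
      by (simp add: opD_nth lphi_nth phicoef_def pd_minus sum_delta_mult[OF f] CX sum_negf)
  next
    case 5
    have "n - 1 \<in> {3..<j}" using 5 assms by auto
    then have P: "CPhi (n - Suc 0) \<in> Dp j" unfolding Dp_def by simp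
    show ?thesis using 5 by (simp add: opD_nth lphi_nth phicoef_def sum_delta_mult[OF f] P)
  qed
qed


lemma alg1:
  fixes Q Xs Ys A B X u1 v1 fu fv R :: "'a::idom"
  shows "Q * (Q * ((u1 + v1) * X^2 - X * (X * Xs)) - ((X * Xs - u1 * X) * B + A * (X * Xs - v1 * X)) * R
     - ((X * Ys - fu * X) * B + A * (X * Ys - fv * X)) * X^2) =
    Q * Q * (u1 + v1) * X^2 - X^2 * Q * (Q * Xs) - ((X * (Q * Xs) - Q * u1 * X) * B + A * (X * (Q * Xs) - Q * v1 * X)) * R
     - ((X * (Q * Ys) - Q * fu * X) * B + A * (X * (Q * Ys) - Q * fv * X)) * X^2"
  by algebra

lemma alg2:
  fixes L X u v u1 v1 W :: "'a::idom"
  shows "(L - u * X) * (L - v * X) * (L - u * X) * (L - v * X) * (u1 + v1) * X^2 - X^2 * ((L - u * X) * (L - v * X)) * (- (X^2))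
    - ((X * (- (X^2)) - (L - u * X) * (L - v * X) * u1 * X) * (L - v * X) + (L - u * X) * (X * (- (X^2)) - (L - u * X) * (L - v * X) * v1 * X)) * ((u + v) * X^2 - X * L)
     - ((X * ((u + v) * X^2 - X * L) - (L - u * X) * (L - v * X) * (W - v * u1) * X) * (L - v * X) + (L - u * X) * (X * ((u + v) * X^2 - X * L) - (L - u * X) * (L - v * X) * (- W - u * v1) * X)) * X^2
   = (L - u * X) * (L - v * X) * X^4 * (1 - W * (v - u))"
  by algebra

lemma alg3:
  fixes Q XYs YXs XR XQ YQ Xs Ys R X :: "'a::idom"
  assumes "XQ * Ys + Q * XYs = XR" "YQ * Xs + Q * YXs = 0" "Q * Xs = - (X^2)" "Q * Ys = R"
  shows "Q * (Q * (XYs - YXs)) = Q * XR - XQ * R - YQ * X^2"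
proof -
  have "Q * (Q * (XYs - YXs)) = Q * (Q * XYs) - Q * (Q * YXs)" by (simp add: algebra_simps)
  also have "Q * XYs = XR - XQ * Ys" using assms(1) by (simp add: algebra_simps)
  also have "Q * YXs = - (YQ * Xs)" using assms(2) by (simp add: eq_neg_iff_add_eq_0 add.commute)
  finally have "Q * (Q * (XYs - YXs)) = Q * XR - XQ * (Q * Ys) + YQ * (Q * Xs)" by (simp add: algebra_simps)
  then show ?thesis using assms(3,4) by (simp add: algebra_simps)
qed

lemma mult_nth_2: "(f * g) $ 2 = f $ 0 * g $ 2 + f $ 1 * g $ 1 + f $ 2 * g $ (0::nat)"
  by (simp add: fps_mult_nth numeral_2_eq_2 sum.atLeast0_atMost_Suc)

lemma Q1: "Qser p $ Suc 0 = - (p (CU 0) + p (CV 0))"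
  by (simp add: Qser_def fps_mult_nth_1 lphi_nth)

lemma I01: "inverse (Qser p) $ 0 = 1" "inverse (Qser p) $ 1 = p (CU 0) + p (CV 0)"
proof -
  show "inverse (Qser p) $ 0 = 1" by (simp add: Q0)
  have "inverse (Qser p) $ 1 = - (\<Sum>i=1..1. Qser p $ i * inverse (Qser p) $ (1 - i))"
    using inv_nth_rec[OF Q0, of p 1] by simp
  then show "inverse (Qser p) $ 1 = p (CU 0) + p (CV 0)" by (simp add: Q1 Q0)
qed

lemma Xs012: "Xser p $ 0 = 0" "Xser p $ 1 = 0" "Xser p $ 2 = -1"
  by (simp_all add: Xser_eq fps_X_power_mult_nth Q0)

lemma R012: "Rser p $ 0 = 0" "Rser p $ Suc 0 = -1" "Rser p $ 2 = p (CU 0) + p (CV 0)"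
  by (simp_all add: Rser_def lphi_nth fps_X_power_nth numeral_2_eq_2)

lemma Ys012: "Yser p $ 0 = 0" "Yser p $ 1 = -1" "Yser p $ 2 = 0"
proof -
  show "Yser p $ 0 = 0" by (simp add: Yser_eq R012)
  show "Yser p $ 1 = -1" by (simp add: Yser_eq fps_mult_nth_1 R012 I01 Q0)
  show "Yser p $ 2 = 0" unfolding Yser_eq mult_nth_2 using R012[of p] I01[of p] by simp
qed

lemma XY1: "Xser p $ Suc 0 = 0" "Yser p $ Suc 0 = -1"
  using Xs012(2) Ys012(2) by (simp_all only: One_nat_def)

lemma allowed_phi: "3 \<le> i \<Longrightarrow> i < j \<Longrightarrow> enat j \<le> k + 1 \<Longrightarrow> allowed k (CPhi i)"
proof -
  assume a: "3 \<le> i" "i < j" "enat j \<le> k + 1"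
  have "enat i \<le> enat j" using a(2) by simp
  then have "enat i \<le> k + 1" using a(3) by (rule order_trans)
  then show ?thesis using a(1) by (simp add: allowed_def)
qed

lemma XsL: assumes "enat j \<le> k + 1"
  shows "eqto j (opD (\<lambda>d. Dxb_coef k d p) (Dp j) lphi p) (fps_X * Xser p)"
  unfolding eqto_def
proof (intro allI impI)
  fix n assume n: "n \<le> j"
  consider "n = 0" | "n = 1" | "n = 2" | "n = 3" | "n \<ge> 4" by linarith
  then show "opD (\<lambda>d. Dxb_coef k d p) (Dp j) lphi p $ n = (fps_X * Xser p) $ n"
    unfolding opD_lphi_nth[OF n]
  proof cases
    case 5
    have al: "allowed k (CPhi (n - 1))" using 5 n assms by (intro allowed_phi[of _ j]) auto
    show "phicoef (\<lambda>d. Dxb_coef k d p) n = (fps_X * Xser p) $ n" using 5 al by (simp add: phicoef_def Dxb_coef_def Xbar_def)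
  qed (simp_all add: phicoef_def Dxb_coef_def Xs012 XY1)
qed

lemma YsL: assumes "enat j \<le> k + 1"
  shows "eqto j (opD (\<lambda>d. Dyb_coef k d p) (Dp j) lphi p) (fps_X * Yser p)"
  unfolding eqto_def
proof (intro allI impI)
  fix n assume n: "n \<le> j"
  consider "n = 0" | "n = 1" | "n = 2" | "n = 3" | "n \<ge> 4" by linarith
  then show "opD (\<lambda>d. Dyb_coef k d p) (Dp j) lphi p $ n = (fps_X * Yser p) $ n"
    unfolding opD_lphi_nth[OF n]
  proof cases
    case 5
    have al: "allowed k (CPhi (n - 1))" using 5 n assms by (intro allowed_phi[of _ j]) auto
    show "phicoef (\<lambda>d. Dyb_coef k d p) n = (fps_X * Yser p) $ n" using 5 al by (simp add: phicoef_def Dyb_coef_def Ybar_def)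
  qed (simp_all add: phicoef_def Dyb_coef_def Ys012 XY1)
qed



lemma SD_cX: "SD (\<lambda>q. fps_const (q c) * fps_X)" by (intro SD_mult SD_coordc SD_const)

lemma opD_cX: "finite T \<Longrightarrow> c \<in> T \<Longrightarrow> opD w T (\<lambda>q. fps_const (q c) * fps_X) p = fps_const (w c) * fps_X"
  by (simp add: opD_mult[OF SD_coordc SD_const] opD_coord opD_const)

lemma Aser_fun: "Aser = (\<lambda>q. lphi q - fps_const (q (CU 0)) * fps_X)" by (rule ext) (simp add: Aser_def)
lemma Bser_fun: "Bser = (\<lambda>q. lphi q - fps_const (q (CV 0)) * fps_X)" by (rule ext) (simp add: Bser_def)
lemma Qser_fun: "Qser = (\<lambda>q. Aser q * Bser q)" by (rule ext) (simp add: Qser_AB)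
lemma Rser_fun: "Rser = (\<lambda>q. (fps_const (q (CU 0)) + fps_const (q (CV 0))) * fps_X ^ 2 - fps_X * lphi q)"
  by (rule ext) (simp add: Rser_def)

lemma opD_A: "finite T \<Longrightarrow> CU 0 \<in> T \<Longrightarrow> opD w T Aser p = opD w T lphi p - fps_const (w (CU 0)) * fps_X"
  unfolding Aser_fun by (simp add: opD_diff[OF SD_lphi SD_cX] opD_cX)
lemma opD_B: "finite T \<Longrightarrow> CV 0 \<in> T \<Longrightarrow> opD w T Bser p = opD w T lphi p - fps_const (w (CV 0)) * fps_X"
  unfolding Bser_fun by (simp add: opD_diff[OF SD_lphi SD_cX] opD_cX)
lemma opD_Q: "opD w T Qser p = opD w T Aser p * Bser p + Aser p * opD w T Bser p"
  unfolding Qser_fun by (rule opD_mult[OF SD_A SD_B])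

lemma opD_R: assumes "finite T" "CU 0 \<in> T" "CV 0 \<in> T"
  shows "opD w T Rser p = (fps_const (w (CU 0)) + fps_const (w (CV 0))) * fps_X ^ 2 - fps_X * opD w T lphi p"
proof -
  have s1: "SD (\<lambda>q. (fps_const (q (CU 0)) + fps_const (q (CV 0))) * fps_X ^ 2)"
    by (intro SD_mult SD_add SD_coordc SD_const)
  have s2: "SD (\<lambda>q. fps_X * lphi q)" by (intro SD_mult SD_const SD_lphi)
  have e1: "opD w T (\<lambda>q. (fps_const (q (CU 0)) + fps_const (q (CV 0))) * fps_X ^ 2) p =
     (fps_const (w (CU 0)) + fps_const (w (CV 0))) * fps_X ^ 2"
    unfolding opD_mult[OF SD_add[OF SD_coordc SD_coordc] SD_const] opD_add[OF SD_coordc SD_coordc]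
      opD_coord[OF assms(1)] opD_const using assms by simp
  have e2: "opD w T (\<lambda>q. fps_X * lphi q) p = fps_X * opD w T lphi p"
    unfolding opD_mult[OF SD_const SD_lphi] opD_const by simp
  show ?thesis unfolding Rser_fun opD_diff[OF s1 s2] e1 e2 ..
qed

lemma opD_QX: "opD w T Qser p * Xser p + Qser p * opD w T Xser p = 0"
proof -
  have "(\<lambda>q. Qser q * Xser q) = (\<lambda>q. - (fps_X ^ 2))" by (rule ext) (rule QX)
  then have "opD w T (\<lambda>q. Qser q * Xser q) p = 0" by (simp add: opD_const)
  then show ?thesis using opD_mult[OF SD_Q SD_X, of w T p] by simp
qed

lemma opD_QY: "opD w T Qser p * Yser p + Qser p * opD w T Yser p = opD w T Rser p"
proof -
  have "(\<lambda>q. Qser q * Yser q) = Rser" by (rule ext) (rule QY)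
  then show ?thesis using opD_mult[OF SD_Q SD_Y, of w T p] by simp
qed

lemma alg2':
  fixes L X u v u1 v1 W :: "'a::idom"
  shows "(L - u * X) * (L - v * X) * ((L - u * X) * (L - v * X)) * (u1 + v1) * X^2 - X^2 * ((L - u * X) * (L - v * X)) * (- (X^2))
    - ((X * (- (X^2)) - (L - u * X) * (L - v * X) * u1 * X) * (L - v * X) + (L - u * X) * (X * (- (X^2)) - (L - u * X) * (L - v * X) * v1 * X)) * ((u + v) * X^2 - X * L)
     - ((X * ((u + v) * X^2 - X * L) - (L - u * X) * (L - v * X) * (W - v * u1) * X) * (L - v * X) + (L - u * X) * (X * ((u + v) * X^2 - X * L) - (L - u * X) * (L - v * X) * (- W - u * v1) * X)) * X^2
   = (L - u * X) * (L - v * X) * X^4 * (1 - W * (v - u))"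
  by algebra

lemma inv_swap: "1 / (a - b) = - (1 / (b - (a::real)))"
proof -
  have "1 / (a - b) = 1 / (- (b - a))" by simp
  also have "\<dots> = - (1 / (b - a))" by (rule divide_minus_right)
  finally show ?thesis .
qed

lemma phi_identity:
  assumes p: "p \<in> Dom" and j: "3 \<le> j" "enat j \<le> k + 1"
  shows "Dxb k (Ybar j) p = Dyb k (Xbar j) p"
proof -
  define T where "T = Dp j"
  define wX where "wX = (\<lambda>d. Dxb_coef k d p)"
  define wY where "wY = (\<lambda>d. Dyb_coef k d p)"
  have fT: "finite T" unfolding T_def by (rule finite_Dp)
  have U0: "CU 0 \<in> T" "CV 0 \<in> T" unfolding T_def Dp_def by auto
  have Ybar_fun: "Ybar j = (\<lambda>q. Yser q $ j)" by (rule ext) (simp add: Ybar_def)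
  have Xbar_fun: "Xbar j = (\<lambda>q. Xser q $ j)" by (rule ext) (simp add: Xbar_def)
  have lhs: "Dxb k (Ybar j) p = opD wX T Yser p $ j"
  proof -
    have "Dxb k (Ybar j) p = (\<Sum>d\<in>Dp j. Dxb_coef k d p * pd d (Ybar j) p)"
      unfolding Dxb_def by (rule vf_finite[OF finite_Dp depends_Ybar[OF order_refl]])
    then show ?thesis unfolding opD_nth T_def wX_def Ybar_fun .
  qed
  have rhs: "Dyb k (Xbar j) p = opD wY T Xser p $ j"
  proof -
    have "Dyb k (Xbar j) p = (\<Sum>d\<in>Dp j. Dyb_coef k d p * pd d (Xbar j) p)"
      unfolding Dyb_def by (rule vf_finite[OF finite_Dp depends_Xbar[OF order_refl]])
    then show ?thesis unfolding opD_nth T_def wY_def Xbar_fun .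
  qed
  define X where "X = (fps_X :: real fps)"
  define L where "L = lphi p"
  define u where "u = fps_const (p (CU 0))"
  define v where "v = fps_const (p (CV 0))"
  define u1 where "u1 = fps_const (p (CU 1))"
  define v1 where "v1 = fps_const (p (CV 1))"
  define fu where "fu = fps_const (Fu p)"
  define fv where "fv = fps_const (Fv p)"
  define W where "W = fps_const (1 / (p (CV 0) - p (CU 0)))"
  define A where "A = Aser p"
  define B where "B = Bser p"
  define Q where "Q = Qser p"
  define R where "R = Rser p"
  define Xs where "Xs = Xser p"
  define Ys where "Ys = Yser p"
  define XL where "XL = opD wX T lphi p"
  define YL where "YL = opD wY T lphi p"
  define XYs where "XYs = opD wX T Yser p"
  define YXs where "YXs = opD wY T Xser p"
  have wX0: "wX (CU 0) = p (CU 1)" "wX (CV 0) = p (CV 1)" by (simp_all add: wX_def Dxb_coef_def)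
  have wY0: "wY (CU 0) = Fu p" "wY (CV 0) = Fv p" by (simp_all add: wY_def Dyb_coef_def)
  have XQ: "opD wX T Qser p = (XL - u1 * X) * B + A * (XL - v1 * X)"
    unfolding opD_Q opD_A[OF fT U0(1)] opD_B[OF fT U0(2)] wX0 XL_def u1_def v1_def X_def A_def B_def ..
  have YQ: "opD wY T Qser p = (YL - fu * X) * B + A * (YL - fv * X)"
    unfolding opD_Q opD_A[OF fT U0(1)] opD_B[OF fT U0(2)] wY0 YL_def fu_def fv_def X_def A_def B_def ..
  have XR: "opD wX T Rser p = (u1 + v1) * X^2 - X * XL"
    unfolding opD_R[OF fT U0] wX0 XL_def u1_def v1_def X_def ..
  have h1: "(opD wX T Qser p) * Ys + Q * XYs = opD wX T Rser p"
    unfolding Ys_def Q_def XYs_def by (rule opD_QY)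
  have h2: "(opD wY T Qser p) * Xs + Q * YXs = 0"
    unfolding Xs_def Q_def YXs_def by (rule opD_QX)
  have QXs: "Q * Xs = - (X^2)" unfolding Q_def Xs_def X_def by (rule QX)
  have QYs: "Q * Ys = R" unfolding Q_def Ys_def R_def by (rule QY)
  define Gf where "Gf a b = Q * ((u1 + v1) * X^2 - X * a) - ((a - u1 * X) * B + A * (a - v1 * X)) * R
     - ((b - fu * X) * B + A * (b - fv * X)) * X^2" for a b
  have st1: "Q * (Q * (XYs - YXs)) = Gf XL YL"
    using alg3[OF h1 h2 QXs QYs] unfolding XQ YQ XR Gf_def .
  have st2: "eqto j (Gf XL YL) (Gf (X * Xs) (X * Ys))"
  proof -
    have eX: "eqto j XL (X * Xs)" unfolding XL_def X_def Xs_def wX_def T_def by (rule XsL[OF j(2)])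
    have eY: "eqto j YL (X * Ys)" unfolding YL_def X_def Ys_def wY_def T_def by (rule YsL[OF j(2)])
    show ?thesis unfolding Gf_def
      by (intro eqto_diff eqto_add eqto_mult eqto_refl eX eY)
  qed
  have st3: "Gf (X * Xs) (X * Ys) = 0"
  proof -
    have uv: "p (CV 0) - p (CU 0) \<noteq> 0" using p by (simp add: Dom_def)
    have QAB: "Q = (L - u * X) * (L - v * X)" by (simp add: Q_def Qser_def L_def u_def v_def X_def)
    have RR: "R = (u + v) * X^2 - X * L" by (simp add: R_def Rser_def L_def u_def v_def X_def)
    have AA: "A = L - u * X" by (simp add: A_def Aser_def L_def u_def X_def)
    have BB: "B = L - v * X" by (simp add: B_def Bser_def L_def v_def X_def)
    have FU: "fu = W - v * u1" unfolding fu_def Fu_def W_def v_def u1_def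
      by (simp only: fps_const_sub fps_const_mult)
    have FV: "fv = - W - u * v1" unfolding fv_def Fv_def W_def u_def v1_def inv_swap[of "p (CU 0)"]
      by (simp only: fps_const_neg fps_const_sub fps_const_mult)
    have WW: "W * (v - u) = 1" using uv by (simp add: W_def v_def u_def)
    have "Q * Gf (X * Xs) (X * Ys) =
      Q * Q * (u1 + v1) * X^2 - X^2 * Q * (Q * Xs) - ((X * (Q * Xs) - Q * u1 * X) * B + A * (X * (Q * Xs) - Q * v1 * X)) * R
       - ((X * (Q * Ys) - Q * fu * X) * B + A * (X * (Q * Ys) - Q * fv * X)) * X^2"
      unfolding Gf_def by (rule alg1)
    also have "\<dots> = (L - u * X) * (L - v * X) * X^4 * (1 - W * (v - u))"
      unfolding QXs QYs unfolding QAB RR AA BB FU FV by (rule alg2')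
    also have "\<dots> = 0" using WW by simp
    finally have "Q * Gf (X * Xs) (X * Ys) = 0" .
    moreover have "Q \<noteq> 0" using Q0[of p] unfolding Q_def by auto
    ultimately show ?thesis by simp
  qed
  have "eqto j (Q * (Q * (XYs - YXs))) 0" using st1 st2 st3 by simp
  then have "eqto j (Q * (XYs - YXs)) 0" by (rule eqto_cancel) (simp add: Q_def Q0)
  then have "eqto j (XYs - YXs) 0" by (rule eqto_cancel) (simp add: Q_def Q0)
  then have "XYs $ j = YXs $ j" unfolding eqto_def by simp
  then show ?thesis using lhs rhs unfolding XYs_def YXs_def by simp
qed


lemma smooth2:
  assumes "smooth f"
  shows "\<And>c q. q \<in> Dom \<Longrightarrow> pdiff c f q"
    and "\<And>c d q. q \<in> Dom \<Longrightarrow> pdiff d (pd c f) q"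
    and "\<And>c d. continuous_on Dom (pd d (pd c f))"
proof -
  have s: "smooth_n (Suc (Suc 0)) f" using assms unfolding smooth_def by blast
  show "\<And>c q. q \<in> Dom \<Longrightarrow> pdiff c f q" using s unfolding pdiff_def by simp
  show "\<And>c d q. q \<in> Dom \<Longrightarrow> pdiff d (pd c f) q" using s unfolding pdiff_def by simp
  show "\<And>c d. continuous_on Dom (pd d (pd c f))" using s by simp
qed

lemma Ck1_pdiff: "Ck (Suc n) g \<Longrightarrow> q \<in> Dom \<Longrightarrow> pdiff c g q" by simp

lemma iterFu: "depends_only ((Dx1 ^^ i) Fu) (Fset i)" "Ck n ((Dx1 ^^ i) Fu)"
  using iter_props[OF depends_Fu Ck_Fu] by blast+
lemma iterFv: "depends_only ((Dx1 ^^ i) Fv) (Fset i)" "Ck n ((Dx1 ^^ i) Fv)"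
  using iter_props[OF depends_Fv Ck_Fv] by blast+

definition Dc :: "coord \<Rightarrow> coord set" where
  "Dc c = (case c of CU i \<Rightarrow> Fset i | CV i \<Rightarrow> Fset i | CPhi j \<Rightarrow> Dp j | _ \<Rightarrow> {})"

lemma finite_Dc: "finite (Dc c)" by (simp add: Dc_def finite_Fset finite_Dp split: coord.split)

lemma Xcoef_fun: "allowed k c \<Longrightarrow> Dxb_coef k c = (case c of CX \<Rightarrow> (\<lambda>q. 1) | CY \<Rightarrow> (\<lambda>q. 0)
   | CU i \<Rightarrow> (\<lambda>q. q (CU (Suc i))) | CV i \<Rightarrow> (\<lambda>q. q (CV (Suc i))) | CPhi j \<Rightarrow> Xbar j)"
  by (rule ext, cases c) (auto simp: Dxb_coef_def)

lemma Ycoef_fun: "allowed k c \<Longrightarrow> Dyb_coef k c = (case c of CX \<Rightarrow> (\<lambda>q. 0) | CY \<Rightarrow> (\<lambda>q. 1)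
   | CU i \<Rightarrow> (Dx1 ^^ i) Fu | CV i \<Rightarrow> (Dx1 ^^ i) Fv | CPhi j \<Rightarrow> Ybar j)"
  by (rule ext, cases c) (auto simp: Dyb_coef_def)

lemma Xcoef_dep: "allowed k c \<Longrightarrow> depends_only (Dxb_coef k c) (Dc c)"
  by (auto simp: Xcoef_fun Dc_def depends_const Fset_def intro!: depends_coord depends_Xbar split: coord.split)

lemma Ycoef_dep: "allowed k c \<Longrightarrow> depends_only (Dyb_coef k c) (Dc c)"
  by (auto simp: Ycoef_fun Dc_def depends_const iterFu iterFv intro!: depends_Ybar split: coord.split)

lemma Xcoef_diff: "allowed k c \<Longrightarrow> pdiff d (Dxb_coef k c) p"
  using D1_Xbar by (auto simp: Xcoef_fun D1_def split: coord.split)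

lemma Ycoef_diff: "allowed k c \<Longrightarrow> p \<in> Dom \<Longrightarrow> pdiff d (Dyb_coef k c) p"
proof -
  assume a: "allowed k c" "p \<in> Dom"
  have u: "pdiff d ((Dx1 ^^ i) Fu) p" for i using iterFu(2)[where n="Suc 0" and i=i] a(2) by simp
  have v: "pdiff d ((Dx1 ^^ i) Fv) p" for i using iterFv(2)[where n="Suc 0" and i=i] a(2) by simp
  show ?thesis using D1_Ybar u v a(1) by (auto simp: Ycoef_fun D1_def split: coord.split)
qed

lemma vf_zero: "vf w (\<lambda>q. a) p = 0" by (simp add: vf_def)

lemma vf_coord: "vf w (\<lambda>q. q d) p = w d p"
proof -
  have "vf w (\<lambda>q. q d) p = (\<Sum>c\<in>{d}. w c p * pd c (\<lambda>q. q d) p)"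
    by (rule vf_finite) (auto intro: depends_coord)
  then show ?thesis by simp
qed

lemma vf_Dx1: assumes "depends_only g (Fset i)" shows "vf (Dxb_coef k) g p = Dx1 g p"
proof -
  have "vf (Dxb_coef k) g p = (\<Sum>c\<in>Fset i. Dxb_coef k c p * pd c g p)" by (rule vf_finite[OF finite_Fset assms])
  also have "\<dots> = (\<Sum>c\<in>Fset i. Dx1_coef c p * pd c g p)"
    by (intro sum.cong refl) (auto simp: Fset_def Dxb_coef_def Dx1_coef_def)
  also have "\<dots> = Dx1 g p" unfolding Dx1_def by (rule vf_finite[OF finite_Fset assms, symmetric])
  finally show ?thesis .
qed

lemma bracket_zero: assumes "allowed k c" "p \<in> Dom"
  shows "vf (Dxb_coef k) (Dyb_coef k c) p - vf (Dyb_coef k) (Dxb_coef k c) p = 0"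
proof (cases c)
  case CX then show ?thesis using assms by (simp add: Xcoef_fun Ycoef_fun vf_zero)
next
  case CY then show ?thesis using assms by (simp add: Xcoef_fun Ycoef_fun vf_zero)
next
  case (CU i)
  have "vf (Dxb_coef k) ((Dx1 ^^ i) Fu) p = (Dx1 ^^ Suc i) Fu p" by (simp add: vf_Dx1[OF iterFu(1)])
  moreover have "vf (Dyb_coef k) (\<lambda>q. q (CU (Suc i))) p = (Dx1 ^^ Suc i) Fu p"
    by (simp add: vf_coord Dyb_coef_def)
  ultimately show ?thesis using assms CU by (simp add: Xcoef_fun Ycoef_fun)
next
  case (CV i)
  have "vf (Dxb_coef k) ((Dx1 ^^ i) Fv) p = (Dx1 ^^ Suc i) Fv p" by (simp add: vf_Dx1[OF iterFv(1)])
  moreover have "vf (Dyb_coef k) (\<lambda>q. q (CV (Suc i))) p = (Dx1 ^^ Suc i) Fv p"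
    by (simp add: vf_coord Dyb_coef_def)
  ultimately show ?thesis using assms CV by (simp add: Xcoef_fun Ycoef_fun)
next
  case (CPhi j)
  have j: "3 \<le> j" "enat j \<le> k + 1" using assms CPhi by (auto simp: allowed_def)
  show ?thesis using assms CPhi phi_identity[OF assms(2) j]
    by (simp add: Xcoef_fun Ycoef_fun Dxb_def Dyb_def)
qed

theorem part1:
  assumes "smooth_fun_on k f" "p \<in> Dom"
  shows "Dxb k (Dyb k f) p = Dyb k (Dxb k f) p"
proof -
  obtain S where S: "finite S" "\<forall>c\<in>S. allowed k c" "depends_only f S" "smooth f"
    using assms(1) unfolding smooth_fun_on_def by blast
  note sm = smooth2[OF S(4)]
  define T where "T = S \<union> (\<Union>c\<in>S. Dc c)"
  have fT: "finite T" unfolding T_def using S(1) finite_Dc by blast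
  have ST: "S \<subseteq> T" unfolding T_def by blast
  have symm: "pd d (pd c f) p = pd c (pd d f) p" if "c \<in> S" "d \<in> S" for c d
  proof (cases "c = d")
    case True then show ?thesis by simp
  next
    case False
    show ?thesis by (rule schwarz[OF assms(2) False]) (auto intro: sm)
  qed
  have "vf (Dxb_coef k) (vf (Dyb_coef k) f) p - vf (Dyb_coef k) (vf (Dxb_coef k) f) p =
     (\<Sum>c\<in>S. (vf (Dxb_coef k) (Dyb_coef k c) p - vf (Dyb_coef k) (Dxb_coef k c) p) * pd c f p)"
  proof (rule commutator[OF assms(2) S(1) fT ST S(3)])
    show "\<And>c. pdiff c f p" using sm(1) assms(2) .
    show "\<And>c d. pdiff d (pd c f) p" using sm(2) assms(2) .
    show "\<And>c d. c \<in> S \<Longrightarrow> d \<in> S \<Longrightarrow> pd d (pd c f) p = pd c (pd d f) p" by (rule symm)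
    show "depends_only (Dxb_coef k c) T" if "c \<in> S" for c
    proof (rule depends_mono)
      show "depends_only (Dxb_coef k c) (Dc c)" using S(2) that by (intro Xcoef_dep) blast
      show "Dc c \<subseteq> T" using that unfolding T_def by blast
    qed
    show "depends_only (Dyb_coef k c) T" if "c \<in> S" for c
    proof (rule depends_mono)
      show "depends_only (Dyb_coef k c) (Dc c)" using S(2) that by (intro Ycoef_dep) blast
      show "Dc c \<subseteq> T" using that unfolding T_def by blast
    qed
    show "pdiff d (Dxb_coef k c) p" if "c \<in> S" for c d using S(2) that by (intro Xcoef_diff) blast
    show "pdiff d (Dyb_coef k c) p" if "c \<in> S" for c d using S(2) that assms(2) by (intro Ycoef_diff) blast+
  qed
  also have "\<dots> = 0" using bracket_zero[OF _ assms(2)] S(2) by simp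
  finally show ?thesis unfolding Dxb_def Dyb_def by simp
qed



lemma line_const:
  assumes d: "\<And>r. r \<in> Dom \<Longrightarrow> pdiff c f r" and z: "\<And>r. r \<in> Dom \<Longrightarrow> pd c f r = 0"
    and seg: "\<And>s. min (q c) t \<le> s \<Longrightarrow> s \<le> max (q c) t \<Longrightarrow> q(c:=s) \<in> Dom"
  shows "f (q(c:=t)) = f q"
proof -
  define g where "g s = f (q(c:=s))" for s
  have D: "(g has_real_derivative 0) (at s)" if "min (q c) t \<le> s" "s \<le> max (q c) t" for s
  proof -
    have r: "q(c:=s) \<in> Dom" using seg that by blast
    have "((\<lambda>x. f ((q(c:=s))(c:=x))) has_real_derivative pd c f (q(c:=s))) (at ((q(c:=s)) c))"
      by (rule pd_has[OF d[OF r]])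
    then show ?thesis using z[OF r] unfolding g_def[abs_def] by simp
  qed
  have C: "continuous_on {min (q c) t..max (q c) t} g"
    by (rule DERIV_continuous_on[where D="\<lambda>_. 0"]) (use D in \<open>auto intro: has_field_derivative_at_within\<close>)
  consider "q c = t" | "q c < t" | "t < q c" by linarith
  then show ?thesis
  proof cases
    case 1 then show ?thesis by auto
  next
    case 2
    have "g t = g (q c)"
      by (rule DERIV_isconst_end[OF 2]) (use C D 2 in \<open>auto simp: min_def max_def\<close>)
    then show ?thesis by (simp add: g_def)
  next
    case 3
    have "g (q c) = g t"
      by (rule DERIV_isconst_end[OF 3]) (use C D 3 in \<open>auto simp: min_def max_def\<close>)
    then show ?thesis by (simp add: g_def)
  qed
qed

lemma pd_transfer:
  assumes "eventually (\<lambda>s. f ((p(d:=s))(c:=t)) = f (p(d:=s))) (nhds (p d))" "d \<noteq> c"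
  shows "pd d f (p(c:=t)) = pd d f p"
proof -
  have e: "(p(c:=t))(d:=s) = (p(d:=s))(c:=t)" for s using assms(2) by (simp add: fun_upd_twist)
  have "pd d f (p(c:=t)) = deriv (\<lambda>s. f ((p(d:=s))(c:=t))) (p d)"
    unfolding pd_def e using assms(2) by simp
  also have "\<dots> = deriv (\<lambda>s. f (p(d:=s))) (p d)" by (rule deriv_cong_ev[OF assms(1) refl])
  finally show ?thesis unfolding pd_def by simp
qed

lemma ev_gt: fixes p :: pt shows "a < p e \<Longrightarrow> eventually (\<lambda>s. a < (p(d:=s)) e) (nhds (p d))"
proof (cases "e = d")
  case True
  assume a: "a < p e"
  have "eventually (\<lambda>s. s \<in> {a<..}) (nhds (p d))" using a True by (intro eventually_nhds_in_open) auto
  then show ?thesis using True by (auto elim: eventually_mono)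
qed simp

lemma ev_lt: fixes p :: pt shows "p e < a \<Longrightarrow> eventually (\<lambda>s. (p(d:=s)) e < a) (nhds (p d))"
proof (cases "e = d")
  case True
  assume a: "p e < a"
  have "eventually (\<lambda>s. s \<in> {..<a}) (nhds (p d))" using a True by (intro eventually_nhds_in_open) auto
  then show ?thesis using True by (auto elim: eventually_mono)
qed simp

text \<open>Polynomial structure of Xbar in u\<close>

lemma lphi_upd: "lphi (p(CU 0 := t)) = lphi p" by (rule fps_ext) (simp add: lphi_nth)

lemma Qt_nth: "Qser (p(CU 0 := t)) $ i = (lphi p * Bser p) $ i - t * (fps_X * Bser p) $ i"
proof -
  have "Qser (p(CU 0 := t)) = (lphi p - fps_const t * fps_X) * Bser p"
    by (simp add: Qser_def Bser_def lphi_upd)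
  also have "\<dots> = lphi p * Bser p - fps_const t * (fps_X * Bser p)" by (simp add: algebra_simps)
  finally show ?thesis by simp
qed

lemma B0: "Bser p $ 0 = 1" by (simp add: Bser_def lphi_nth)
lemma XB1: "(fps_X * Bser p) $ 1 = 1" by (simp add: B0)

lemma coeff_lin_mult: "coeff ([:a, b:] * P) (Suc m) = a * coeff P (Suc m) + b * coeff P m"
  by simp

lemma Ipoly: "\<exists>P. degree P \<le> n \<and> coeff P n = 1 \<and> (\<forall>t. inverse (Qser (p(CU 0 := t))) $ n = poly P t)"
proof (induction n rule: less_induct)
  case (less n)
  show ?case
  proof (cases "n = 0")
    case True
    show ?thesis by (rule exI[of _ "[:1:]"]) (simp add: True Q0)
  next
    case False
    have "\<forall>m. \<exists>P. m < n \<longrightarrow> degree P \<le> m \<and> coeff P m = 1 \<and> (\<forall>t. inverse (Qser (p(CU 0 := t))) $ m = poly P t)"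
      using less by blast
    then obtain PP where PP: "\<And>m. m < n \<Longrightarrow> degree (PP m) \<le> m \<and> coeff (PP m) m = 1 \<and>
        (\<forall>t. inverse (Qser (p(CU 0 := t))) $ m = poly (PP m) t)"
      by metis
    define a where "a i = (lphi p * Bser p) $ i" for i
    define b where "b i = - (fps_X * Bser p) $ i" for i
    define P where "P = - (\<Sum>i=1..n. [:a i, b i:] * PP (n - i))"
    have poly: "inverse (Qser (p(CU 0 := t))) $ n = poly P t" for t
    proof -
      have "inverse (Qser (p(CU 0 := t))) $ n =
          - (\<Sum>i=1..n. Qser (p(CU 0 := t)) $ i * inverse (Qser (p(CU 0 := t))) $ (n - i))"
        using inv_nth_rec[OF Q0, of "p(CU 0 := t)" n] False by simp
      also have "\<dots> = - (\<Sum>i=1..n. poly [:a i, b i:] t * poly (PP (n - i)) t)"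
        using PP False by (intro arg_cong[where f=uminus] sum.cong refl) (auto simp: Qt_nth a_def b_def)
      also have "\<dots> = poly P t" by (simp add: P_def poly_sum algebra_simps)
      finally show ?thesis .
    qed
    have deg: "degree P \<le> n"
      unfolding P_def degree_minus
    proof (rule degree_sum_le)
      fix i assume i: "i \<in> {1..n}"
      have "degree ([:a i, b i:] * PP (n - i)) \<le> degree [:a i, b i:] + degree (PP (n - i))"
        by (rule degree_mult_le)
      also have "\<dots> \<le> 1 + (n - i)" using PP[of "n - i"] i by (intro add_mono) auto
      also have "\<dots> \<le> n" using i by auto
      finally show "degree ([:a i, b i:] * PP (n - i)) \<le> n" .
    qed simp
    obtain m where m: "n = Suc m" using False by (cases n) auto
    have c0: "coeff ([:a i, b i:] * PP (n - i)) n = 0" if i: "i \<in> {2..n}" for i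
    proof (rule coeff_eq_0)
      have "degree ([:a i, b i:] * PP (n - i)) \<le> degree [:a i, b i:] + degree (PP (n - i))"
        by (rule degree_mult_le)
      also have "\<dots> \<le> 1 + (n - i)" using PP[of "n - i"] i by (intro add_mono) auto
      also have "\<dots> < n" using i by auto
      finally show "degree ([:a i, b i:] * PP (n - i)) < n" .
    qed
    have c1: "coeff ([:a 1, b 1:] * PP (n - 1)) n = -1"
    proof -
      have "coeff (PP m) (Suc m) = 0" using PP[of m] m by (intro coeff_eq_0) auto
      moreover have "coeff (PP m) m = 1" using PP[of m] m by auto
      moreover have "b 1 = -1" by (simp add: b_def B0)
      ultimately show ?thesis unfolding m coeff_lin_mult by simp
    qed
    define cf where "cf i = coeff ([:a i, b i:] * PP (n - i)) n" for i
    have "coeff P n = - (\<Sum>i=1..n. cf i)"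
      by (simp add: P_def coeff_sum cf_def)
    also have "(\<Sum>i=1..n. cf i) = cf 1 + (\<Sum>i=2..n. cf i)"
    proof -
      have e: "{1..n} = insert 1 {2..n}" using False by auto
      show ?thesis unfolding e by (rule sum.insert) auto
    qed
    also have "\<dots> = -1" using c0 c1 by (simp add: cf_def)
    finally have "coeff P n = 1" by simp
    then show ?thesis using deg poly by blast
  qed
qed

lemma Xbar_poly: assumes "2 \<le> j"
  shows "\<exists>P. degree P \<le> j - 2 \<and> coeff P (j - 2) = -1 \<and> (\<forall>t. Xbar j (p(CU 0 := t)) = poly P t)"
proof -
  obtain P where P: "degree P \<le> j - 2" "coeff P (j - 2) = 1" "\<And>t. inverse (Qser (p(CU 0 := t))) $ (j - 2) = poly P t"
    using Ipoly[of "j - 2" p] by blast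
  have "Xbar j (p(CU 0 := t)) = poly (- P) t" for t
    using assms P(3)[of t] by (simp add: Xbar_def Xser_eq fps_X_power_mult_nth)
  then show ?thesis using P(1,2) by (intro exI[of _ "- P"]) auto
qed


lemma poly_indep:
  fixes J :: "nat set" and P :: "nat \<Rightarrow> real poly"
  assumes fin: "finite J" and J3: "\<And>j. j \<in> J \<Longrightarrow> 3 \<le> j" and Ts: "infinite Ts"
   and PP: "\<And>j. j \<in> J \<Longrightarrow> degree (P j) \<le> j - 2 \<and> coeff (P j) (j - 2) = -1"
   and eq: "\<And>t. t \<in> Ts \<Longrightarrow> c0 + (\<Sum>j\<in>J. a j * poly (P j) t) = 0"
  shows "\<forall>j\<in>J. a j = 0"
proof (rule ccontr)
  assume na: "\<not> (\<forall>j\<in>J. a j = 0)"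
  define J' where "J' = {j \<in> J. a j \<noteq> 0}"
  have J'ne: "J' \<noteq> {}" and fJ': "finite J'" using na fin unfolding J'_def by auto
  define m where "m = Max J'"
  have mJ': "m \<in> J'" unfolding m_def using Max_in[OF fJ' J'ne] .
  have mJ: "m \<in> J" and am: "a m \<noteq> 0" using mJ' unfolding J'_def by auto
  have m3: "3 \<le> m" using J3[OF mJ] .
  define R where "R = [:c0:] + (\<Sum>j\<in>J. smult (a j) (P j))"
  have "poly R t = 0" if "t \<in> Ts" for t using eq[OF that] by (simp add: R_def poly_sum)
  then have "Ts \<subseteq> {t. poly R t = 0}" by blast
  then have "R = 0" using Ts poly_roots_finite finite_subset by blast
  then have "coeff R (m - 2) = 0" by simp
  moreover have "coeff R (m - 2) = - a m"
  proof -
    have c0: "coeff [:c0:] (m - 2) = 0"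
    proof -
      have "m - 2 = Suc (m - 3)" using m3 by auto
      then show ?thesis by simp
    qed
    have "(\<Sum>j\<in>J. a j * coeff (P j) (m - 2)) = (\<Sum>j\<in>J. if j = m then - a m else 0)"
    proof (rule sum.cong[OF refl])
      fix j assume j: "j \<in> J"
      show "a j * coeff (P j) (m - 2) = (if j = m then - a m else 0)"
      proof (cases "j = m")
        case True then show ?thesis using PP[OF j] by simp
      next
        case False
        show ?thesis
        proof (cases "a j = 0")
          case True then show ?thesis using False by simp
        next
          case ne: False
          then have "j \<in> J'" using j unfolding J'_def by auto
          then have "j \<le> m" unfolding m_def using fJ' by simp
          then have "j < m" using False by simp
          then have "degree (P j) < m - 2" using PP[OF j] J3[OF j] by linarith
          then have "coeff (P j) (m - 2) = 0" by (rule coeff_eq_0)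
          then show ?thesis using False by simp
        qed
      qed
    qed
    also have "\<dots> = - a m" using mJ fin by simp
    finally show ?thesis using c0 by (simp add: R_def coeff_sum)
  qed
  ultimately show False using am by simp
qed


lemma shiftU:
  assumes S: "finite S" "depends_only f S" and fd: "\<And>c r. r \<in> Dom \<Longrightarrow> pdiff c f r"
    and ZX: "\<And>x. x \<in> Dom \<Longrightarrow> (\<Sum>c\<in>S. Dxb_coef k c x * pd c f x) = 0"
    and h: "\<And>r. r \<in> Dom \<Longrightarrow> pd (CU (Suc i)) f r = 0" and x: "x \<in> Dom"
  shows "pd (CU i) f x = 0"
proof -
  define e where "e = CU (Suc i)"
  define x' where "x' = x(e := x e + 1)"
  have x'D: "x' \<in> Dom" using x by (simp add: x'_def e_def Dom_def)
  have c1: "f (r(e:=t)) = f r" if "r \<in> Dom" for r t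
    by (rule line_const[OF fd]) (use h that in \<open>auto simp: e_def Dom_def\<close>)
  have pdeq: "pd c f x' = pd c f x" for c
  proof (cases "c = e")
    case True then show ?thesis using h x x'D by (simp add: e_def)
  next
    case False
    have "eventually (\<lambda>s. f ((x(c:=s))(e:=x e + 1)) = f (x(c:=s))) (nhds (x c))"
      using dom_ev[OF x, of c] by (rule eventually_mono) (rule c1)
    from pd_transfer[OF this False] show ?thesis by (simp add: x'_def)
  qed
  have coef: "Dxb_coef k c x' = Dxb_coef k c x + (if c = CU i then 1 else 0)" for c
  proof (cases c)
    case (CPhi j)
    have "depends_only (Xbar j) (Dp j)" by (rule depends_Xbar) simp
    moreover have "\<forall>d\<in>Dp j. x' d = x d" by (auto simp: x'_def e_def Dp_def)
    ultimately have "Xbar j x' = Xbar j x" unfolding depends_only_def by blast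
    then show ?thesis using CPhi by (simp add: Dxb_coef_def)
  qed (auto simp: Dxb_coef_def x'_def e_def)
  have "(\<Sum>c\<in>S. Dxb_coef k c x' * pd c f x') =
      (\<Sum>c\<in>S. Dxb_coef k c x * pd c f x + (if c = CU i then pd c f x else 0))"
    by (intro sum.cong refl) (simp add: coef pdeq distrib_right)
  also have "\<dots> = (\<Sum>c\<in>S. Dxb_coef k c x * pd c f x) + (\<Sum>c\<in>S. (if c = CU i then pd c f x else 0))"
    by (rule sum.distrib)
  also have "(\<Sum>c\<in>S. (if c = CU i then pd c f x else 0)) = (if CU i \<in> S then pd (CU i) f x else 0)"
    by (rule sum.delta[OF S(1)])
  finally have "(if CU i \<in> S then pd (CU i) f x else 0) = 0" using ZX[OF x'D] ZX[OF x] by simp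
  then show ?thesis using pd_notin[OF S(2)] by (auto split: if_splits)
qed

lemma shiftV:
  assumes S: "finite S" "depends_only f S" and fd: "\<And>c r. r \<in> Dom \<Longrightarrow> pdiff c f r"
    and ZX: "\<And>x. x \<in> Dom \<Longrightarrow> (\<Sum>c\<in>S. Dxb_coef k c x * pd c f x) = 0"
    and h: "\<And>r. r \<in> Dom \<Longrightarrow> pd (CV (Suc i)) f r = 0" and x: "x \<in> Dom"
  shows "pd (CV i) f x = 0"
proof -
  define e where "e = CV (Suc i)"
  define x' where "x' = x(e := x e + 1)"
  have x'D: "x' \<in> Dom" using x by (simp add: x'_def e_def Dom_def)
  have c1: "f (r(e:=t)) = f r" if "r \<in> Dom" for r t
    by (rule line_const[OF fd]) (use h that in \<open>auto simp: e_def Dom_def\<close>)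
  have pdeq: "pd c f x' = pd c f x" for c
  proof (cases "c = e")
    case True then show ?thesis using h x x'D by (simp add: e_def)
  next
    case False
    have "eventually (\<lambda>s. f ((x(c:=s))(e:=x e + 1)) = f (x(c:=s))) (nhds (x c))"
      using dom_ev[OF x, of c] by (rule eventually_mono) (rule c1)
    from pd_transfer[OF this False] show ?thesis by (simp add: x'_def)
  qed
  have coef: "Dxb_coef k c x' = Dxb_coef k c x + (if c = CV i then 1 else 0)" for c
  proof (cases c)
    case (CPhi j)
    have "depends_only (Xbar j) (Dp j)" by (rule depends_Xbar) simp
    moreover have "\<forall>d\<in>Dp j. x' d = x d" by (auto simp: x'_def e_def Dp_def)
    ultimately have "Xbar j x' = Xbar j x" unfolding depends_only_def by blast
    then show ?thesis using CPhi by (simp add: Dxb_coef_def)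
  qed (auto simp: Dxb_coef_def x'_def e_def)
  have "(\<Sum>c\<in>S. Dxb_coef k c x' * pd c f x') =
      (\<Sum>c\<in>S. Dxb_coef k c x * pd c f x + (if c = CV i then pd c f x else 0))"
    by (intro sum.cong refl) (simp add: coef pdeq distrib_right)
  also have "\<dots> = (\<Sum>c\<in>S. Dxb_coef k c x * pd c f x) + (\<Sum>c\<in>S. (if c = CV i then pd c f x else 0))"
    by (rule sum.distrib)
  also have "(\<Sum>c\<in>S. (if c = CV i then pd c f x else 0)) = (if CV i \<in> S then pd (CV i) f x else 0)"
    by (rule sum.delta[OF S(1)])
  finally have "(if CV i \<in> S then pd (CV i) f x else 0) = 0" using ZX[OF x'D] ZX[OF x] by simp
  then show ?thesis using pd_notin[OF S(2)] by (auto split: if_splits)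
qed


lemma allUV:
  assumes S: "finite S" "depends_only f S" and fd: "\<And>c r. r \<in> Dom \<Longrightarrow> pdiff c f r"
    and ZX: "\<And>x. x \<in> Dom \<Longrightarrow> (\<Sum>c\<in>S. Dxb_coef k c x * pd c f x) = 0"
  shows "\<forall>r\<in>Dom. pd (CU i) f r = 0 \<and> pd (CV i) f r = 0"
proof -
  have "finite (CU -` S \<union> CV -` S)" using S(1) by (intro finite_UnI finite_vimageI) (auto simp: inj_def)
  then have "\<exists>N. \<forall>i \<in> CU -` S \<union> CV -` S. i < N" by (rule finite_nat_set_iff_bounded[THEN iffD1])
  then obtain N where N0: "\<forall>i \<in> CU -` S \<union> CV -` S. i < N" by (elim exE)
  have N: "CU i \<notin> S \<and> CV i \<notin> S" if "N \<le> i" for i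
  proof -
    have "i \<notin> CU -` S \<union> CV -` S" using N0 that by (meson not_less)
    then show ?thesis by simp
  qed
  have main: "\<forall>i. N \<le> i + m \<longrightarrow> (\<forall>r\<in>Dom. pd (CU i) f r = 0 \<and> pd (CV i) f r = 0)" for m
  proof (induction m)
    case 0 then show ?case using N pd_notin[OF S(2)] by auto
  next
    case (Suc m)
    show ?case
    proof (intro allI impI)
      fix i assume "N \<le> i + Suc m"
      then have "N \<le> Suc i + m" by simp
      then have h: "\<forall>r\<in>Dom. pd (CU (Suc i)) f r = 0 \<and> pd (CV (Suc i)) f r = 0" using Suc.IH by blast
      show "\<forall>r\<in>Dom. pd (CU i) f r = 0 \<and> pd (CV i) f r = 0"
      proof
        fix r assume r: "r \<in> Dom"
        show "pd (CU i) f r = 0 \<and> pd (CV i) f r = 0"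
        proof
          show "pd (CU i) f r = 0" by (rule shiftU[OF S fd ZX _ r]) (use h in auto)
          show "pd (CV i) f r = 0" by (rule shiftV[OF S fd ZX _ r]) (use h in auto)
        qed
      qed
    qed
  qed
  show ?thesis using main[of N] by simp
qed

definition sameside :: "pt \<Rightarrow> real \<Rightarrow> bool" where
  "sameside x t = ((x (CU 0) < x (CV 0) \<and> t < x (CV 0)) \<or> (x (CV 0) < x (CU 0) \<and> x (CV 0) < t))"

lemma move_u:
  assumes fd: "\<And>c r. r \<in> Dom \<Longrightarrow> pdiff c f r" and z: "\<And>r. r \<in> Dom \<Longrightarrow> pd (CU 0) f r = 0"
    and ss: "sameside x t"
  shows "f (x(CU 0 := t)) = f x"
proof (rule line_const[OF fd z])
  fix s assume "min (x (CU 0)) t \<le> s" "s \<le> max (x (CU 0)) t"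
  then show "x(CU 0 := s) \<in> Dom" using ss by (auto simp: sameside_def Dom_def min_def max_def split: if_splits)
qed

lemma move_v:
  assumes fd: "\<And>c r. r \<in> Dom \<Longrightarrow> pdiff c f r" and z: "\<And>r. r \<in> Dom \<Longrightarrow> pd (CV 0) f r = 0"
    and ss: "(x (CU 0) < x (CV 0) \<and> x (CU 0) < t) \<or> (x (CV 0) < x (CU 0) \<and> t < x (CU 0))"
  shows "f (x(CV 0 := t)) = f x"
proof (rule line_const[OF fd z])
  fix s assume "min (x (CV 0)) t \<le> s" "s \<le> max (x (CV 0)) t"
  then show "x(CV 0 := s) \<in> Dom" using ss by (auto simp: Dom_def min_def max_def split: if_splits)
qed

lemma move_other:
  assumes fd: "\<And>c r. r \<in> Dom \<Longrightarrow> pdiff c f r" and z: "\<And>r. r \<in> Dom \<Longrightarrow> pd c f r = 0"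
    and c: "c \<noteq> CU 0" "c \<noteq> CV 0" and x: "x \<in> Dom"
  shows "f (x(c := t)) = f x"
  by (rule line_const[OF fd z]) (use c x in \<open>auto simp: Dom_def\<close>)


lemma all_zero:
  assumes S: "finite S" "\<forall>c\<in>S. allowed k c" "depends_only f S"
    and fd: "\<And>c r. r \<in> Dom \<Longrightarrow> pdiff c f r"
    and ZX: "\<And>x. x \<in> Dom \<Longrightarrow> (\<Sum>c\<in>S. Dxb_coef k c x * pd c f x) = 0"
    and ZY: "\<And>x. x \<in> Dom \<Longrightarrow> (\<Sum>c\<in>S. Dyb_coef k c x * pd c f x) = 0"
    and UV: "\<And>i r. r \<in> Dom \<Longrightarrow> pd (CU i) f r = 0 \<and> pd (CV i) f r = 0"
    and r: "r \<in> Dom"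
  shows "pd c f r = 0"
proof -
  define Ts where "Ts = (if r (CU 0) < r (CV 0) then {..< r (CV 0)} else {r (CV 0)<..})"
  have Tsinf: "infinite Ts" by (simp add: Ts_def infinite_Iio infinite_Ioi)
  have rtD: "r(CU 0 := t) \<in> Dom" if "t \<in> Ts" for t using that by (auto simp: Ts_def Dom_def split: if_splits)
  have zU: "\<And>x. x \<in> Dom \<Longrightarrow> pd (CU 0) f x = 0" using UV by blast
  have pdeq: "pd c f (r(CU 0 := t)) = pd c f r" if t: "t \<in> Ts" for c t
  proof (cases "c = CU 0")
    case True then show ?thesis using UV[OF r] UV[OF rtD[OF t]] by simp
  next
    case False
    have ev: "eventually (\<lambda>s. sameside (r(c:=s)) t) (nhds (r c))"
    proof (cases "r (CU 0) < r (CV 0)")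
      case True
      then have "max (r (CU 0)) t < r (CV 0)" using t by (simp add: Ts_def)
      from ev_gt[where p=r and e="CV 0", OF this, of c] show ?thesis
        by (rule eventually_mono) (use False in \<open>auto simp: sameside_def\<close>)
    next
      case F2: False
      have "r (CV 0) < r (CU 0)" using r F2 by (auto simp: Dom_def)
      then have "r (CV 0) < min (r (CU 0)) t" using t F2 by (simp add: Ts_def)
      from ev_lt[where p=r and e="CV 0", OF this, of c] show ?thesis
        by (rule eventually_mono) (use False in \<open>auto simp: sameside_def\<close>)
    qed
    have "eventually (\<lambda>s. f ((r(c:=s))(CU 0 := t)) = f (r(c:=s))) (nhds (r c))"
      using ev by (rule eventually_mono) (rule move_u[OF fd zU])
    from pd_transfer[OF this False] show ?thesis .
  qed
  define J where "J = CPhi -` S"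
  have fJ: "finite J" unfolding J_def using S(1) by (intro finite_vimageI) (auto simp: inj_def)
  have alJ: "allowed k (CPhi j)" if "j \<in> J" for j using S(2) that by (auto simp: J_def)
  have J3: "3 \<le> j" if "j \<in> J" for j using alJ[OF that] by (simp add: allowed_def)
  have ex: "\<forall>j\<in>J. \<exists>P. degree P \<le> j - 2 \<and> coeff P (j - 2) = -1 \<and> (\<forall>t. Xbar j (r(CU 0 := t)) = poly P t)"
  proof
    fix j assume j: "j \<in> J"
    have "2 \<le> j" using J3[OF j] by simp
    then show "\<exists>P. degree P \<le> j - 2 \<and> coeff P (j - 2) = -1 \<and> (\<forall>t. Xbar j (r(CU 0 := t)) = poly P t)"
      by (rule Xbar_poly)
  qed
  then have "\<exists>PX. \<forall>j\<in>J. degree (PX j) \<le> j - 2 \<and> coeff (PX j) (j - 2) = -1 \<and>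
      (\<forall>t. Xbar j (r(CU 0 := t)) = poly (PX j) t)" by (rule bchoice)
  then obtain PX where PX0: "\<forall>j\<in>J. degree (PX j) \<le> j - 2 \<and> coeff (PX j) (j - 2) = -1 \<and>
      (\<forall>t. Xbar j (r(CU 0 := t)) = poly (PX j) t)" by (elim exE)
  have PX: "\<And>j. j \<in> J \<Longrightarrow> degree (PX j) \<le> j - 2 \<and> coeff (PX j) (j - 2) = -1 \<and>
      (\<forall>t. Xbar j (r(CU 0 := t)) = poly (PX j) t)" using PX0 by blast
  define c0 where "c0 = (\<Sum>c\<in>S - range CPhi. Dxb_coef k c r * pd c f r)"
  have eq: "c0 + (\<Sum>j\<in>J. pd (CPhi j) f r * poly (PX j) t) = 0" if t: "t \<in> Ts" for t
  proof -
    define g where "g c = Dxb_coef k c (r(CU 0 := t)) * pd c f r" for c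
    have "0 = (\<Sum>c\<in>S. Dxb_coef k c (r(CU 0:=t)) * pd c f (r(CU 0:=t)))" using ZX[OF rtD[OF t]] by simp
    also have "\<dots> = (\<Sum>c\<in>S. g c)" unfolding g_def using pdeq[OF t] by simp
    also have "\<dots> = (\<Sum>c\<in>S - range CPhi. g c) + (\<Sum>c\<in>S \<inter> range CPhi. g c)"
      using sum.Int_Diff[OF S(1), of g "range CPhi"] by (simp add: add.commute)
    also have "(\<Sum>c\<in>S - range CPhi. g c) = c0"
      unfolding c0_def
    proof (rule sum.cong[OF refl])
      fix c assume c: "c \<in> S - range CPhi"
      show "g c = Dxb_coef k c r * pd c f r"
        by (cases c) (use c UV[OF r] in \<open>auto simp: g_def Dxb_coef_def\<close>)
    qed
    also have "S \<inter> range CPhi = CPhi ` J" by (auto simp: J_def)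
    also have "(\<Sum>c\<in>CPhi ` J. g c) = (\<Sum>j\<in>J. g (CPhi j))" by (simp add: sum.reindex inj_on_def)
    also have "\<dots> = (\<Sum>j\<in>J. pd (CPhi j) f r * poly (PX j) t)"
    proof (rule sum.cong[OF refl])
      fix j assume j: "j \<in> J"
      show "g (CPhi j) = pd (CPhi j) f r * poly (PX j) t"
        using alJ[OF j] PX[OF j] by (simp add: g_def Dxb_coef_def)
    qed
    finally show ?thesis by simp
  qed
  have phi0: "\<forall>j\<in>J. pd (CPhi j) f r = 0"
    by (rule poly_indep[OF fJ J3 Tsinf, of PX c0 "\<lambda>j. pd (CPhi j) f r"]) (use PX eq in auto)
  have phiall: "pd (CPhi j) f r = 0" for j
  proof (cases "CPhi j \<in> S")
    case True then show ?thesis using phi0 by (auto simp: J_def)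
  next
    case False then show ?thesis using pd_notin[OF S(3)] by blast
  qed
  have X0: "pd CX f r = 0"
  proof -
    have "(\<Sum>c\<in>S. Dxb_coef k c r * pd c f r) = (\<Sum>c\<in>S. if c = CX then pd CX f r else 0)"
    proof (rule sum.cong[OF refl])
      fix c assume "c \<in> S"
      show "Dxb_coef k c r * pd c f r = (if c = CX then pd CX f r else 0)"
        by (cases c) (use UV[OF r] phiall in \<open>auto simp: Dxb_coef_def\<close>)
    qed
    also have "\<dots> = (if CX \<in> S then pd CX f r else 0)" by (rule sum.delta[OF S(1)])
    finally show ?thesis using ZX[OF r] pd_notin[OF S(3)] by (auto split: if_splits)
  qed
  have Y0: "pd CY f r = 0"
  proof -
    have "(\<Sum>c\<in>S. Dyb_coef k c r * pd c f r) = (\<Sum>c\<in>S. if c = CY then pd CY f r else 0)"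
    proof (rule sum.cong[OF refl])
      fix c assume "c \<in> S"
      show "Dyb_coef k c r * pd c f r = (if c = CY then pd CY f r else 0)"
        by (cases c) (use UV[OF r] phiall in \<open>auto simp: Dyb_coef_def\<close>)
    qed
    also have "\<dots> = (if CY \<in> S then pd CY f r else 0)" by (rule sum.delta[OF S(1)])
    finally show ?thesis using ZY[OF r] pd_notin[OF S(3)] by (auto split: if_splits)
  qed
  show ?thesis by (cases c) (use X0 Y0 phiall UV[OF r] in auto)
qed


lemma path:
  assumes S: "finite S" "depends_only f S" and fd: "\<And>c r. r \<in> Dom \<Longrightarrow> pdiff c f r"
    and Z0: "\<And>c r. r \<in> Dom \<Longrightarrow> pd c f r = 0"
    and p: "p \<in> Dom" and q: "q \<in> Dom" and same: "(p (CU 0) < p (CV 0)) = (q (CU 0) < q (CV 0))"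
  shows "f p = f q"
proof -
  define F where "F = S - {CU 0, CV 0}"
  have fF: "finite F" using S(1) by (simp add: F_def)
  have ov: "f (override_on x q G) = f x \<and> override_on x q G \<in> Dom" if "finite G" "G \<subseteq> F" "x \<in> Dom" for G x
    using that(1,2)
  proof (induction G rule: finite_induct)
    case empty then show ?case using that(3) by simp
  next
    case (insert c G)
    define y where "y = override_on x q G"
    have IH: "f y = f x" "y \<in> Dom" using insert by (auto simp: y_def)
    have c: "c \<noteq> CU 0" "c \<noteq> CV 0" using insert(4) by (auto simp: F_def)
    have e: "override_on x q (insert c G) = y(c := q c)" by (rule ext) (simp add: y_def override_on_def)
    have A0: "f (y(c := q c)) = f y" by (rule move_other[OF fd Z0 c IH(2)])
    have A: "f (y(c := q c)) = f x" using A0 IH(1) by (rule trans)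
    have B: "y(c := q c) \<in> Dom" using IH(2) c by (simp add: Dom_def)
    show ?case unfolding e by (intro conjI A B)
  qed
  define p1 where "p1 = override_on p q F"
  have p1: "f p1 = f p" "p1 \<in> Dom" using ov[OF fF order_refl p] by (auto simp: p1_def)
  have p1uv: "p1 (CU 0) = p (CU 0)" "p1 (CV 0) = p (CV 0)" by (auto simp: p1_def override_on_def F_def)
  have p1F: "p1 c = q c" if "c \<in> F" for c using that by (simp add: p1_def override_on_def)
  have zU: "\<And>r. r \<in> Dom \<Longrightarrow> pd (CU 0) f r = 0" and zV: "\<And>r. r \<in> Dom \<Longrightarrow> pd (CV 0) f r = 0"
    using Z0 by blast+
  have pne: "p (CU 0) \<noteq> p (CV 0)" and qne: "q (CU 0) \<noteq> q (CV 0)" using p q by (auto simp: Dom_def)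
  obtain p4 where p4: "f p4 = f p1" "p4 (CU 0) = q (CU 0)" "p4 (CV 0) = q (CV 0)"
    "\<And>c. c \<in> F \<Longrightarrow> p4 c = p1 c"
  proof (cases "p (CU 0) < p (CV 0)")
    case True
    then have qT: "q (CU 0) < q (CV 0)" using same by simp
    define M where "M = max (p (CV 0)) (q (CV 0))"
    define p2 where "p2 = p1(CV 0 := M)"
    define p3 where "p3 = p2(CU 0 := q (CU 0))"
    define p4 where "p4 = p3(CV 0 := q (CV 0))"
    have "f p2 = f p1" unfolding p2_def
      by (rule move_v[OF fd zV]) (use True p1uv in \<open>auto simp: M_def\<close>)
    moreover have "f p3 = f p2" unfolding p3_def
      by (rule move_u[OF fd zU]) (use True qT p1uv in \<open>auto simp: M_def p2_def sameside_def\<close>)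
    moreover have "f p4 = f p3" unfolding p4_def
      by (rule move_v[OF fd zV]) (use True qT p1uv in \<open>auto simp: M_def p2_def p3_def\<close>)
    ultimately show ?thesis
      by (intro that[of p4]) (auto simp: p4_def p3_def p2_def F_def)
  next
    case False
    then have pF: "p (CV 0) < p (CU 0)" using pne by simp
    then have qF: "q (CV 0) < q (CU 0)" using same qne by auto
    define M where "M = max (p (CU 0)) (q (CU 0))"
    define p2 where "p2 = p1(CU 0 := M)"
    define p3 where "p3 = p2(CV 0 := q (CV 0))"
    define p4 where "p4 = p3(CU 0 := q (CU 0))"
    have "f p2 = f p1" unfolding p2_def
      by (rule move_u[OF fd zU]) (use pF p1uv in \<open>auto simp: M_def sameside_def\<close>)
    moreover have "f p3 = f p2" unfolding p3_def
      by (rule move_v[OF fd zV]) (use pF qF p1uv in \<open>auto simp: M_def p2_def\<close>)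
    moreover have "f p4 = f p3" unfolding p4_def
      by (rule move_u[OF fd zU]) (use pF qF p1uv in \<open>auto simp: M_def p2_def p3_def sameside_def\<close>)
    ultimately show ?thesis
      by (intro that[of p4]) (auto simp: p4_def p3_def p2_def F_def)
  qed
  have "\<forall>c\<in>S. p4 c = q c"
  proof
    fix c assume c: "c \<in> S"
    show "p4 c = q c"
    proof (cases "c \<in> F")
      case True then show ?thesis using p4(4) p1F by simp
    next
      case False then have "c = CU 0 \<or> c = CV 0" using c by (auto simp: F_def)
      then show ?thesis using p4(2,3) by auto
    qed
  qed
  then have "f p4 = f q" using S(2) unfolding depends_only_def by blast
  then show ?thesis using p4(1) p1(1) by simp
qed

theorem part2:
  assumes f: "smooth_fun_on k f" and Z: "\<forall>x\<in>Dom. Dxb k f x = 0 \<and> Dyb k f x = 0"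
    and p: "p \<in> Dom" and q: "q \<in> Dom" and same: "(p (CU 0) < p (CV 0)) = (q (CU 0) < q (CV 0))"
  shows "f p = f q"
proof -
  obtain S where S: "finite S" "\<forall>c\<in>S. allowed k c" "depends_only f S" "smooth f"
    using f unfolding smooth_fun_on_def by blast
  have fd: "\<And>c r. r \<in> Dom \<Longrightarrow> pdiff c f r" by (rule smooth2(1)[OF S(4)])
  have ZX: "(\<Sum>c\<in>S. Dxb_coef k c x * pd c f x) = 0" if "x \<in> Dom" for x
    using Z that vf_finite[OF S(1) S(3), of "Dxb_coef k" x] unfolding Dxb_def by simp
  have ZY: "(\<Sum>c\<in>S. Dyb_coef k c x * pd c f x) = 0" if "x \<in> Dom" for x
    using Z that vf_finite[OF S(1) S(3), of "Dyb_coef k" x] unfolding Dyb_def by simp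
  have UV: "\<And>i r. r \<in> Dom \<Longrightarrow> pd (CU i) f r = 0 \<and> pd (CV i) f r = 0"
    using allUV[OF S(1) S(3) fd ZX] by blast
  have Z0: "\<And>c r. r \<in> Dom \<Longrightarrow> pd c f r = 0"
    by (rule all_zero[OF S(1,2,3) fd ZX ZY UV])
  show ?thesis by (rule path[OF S(1) S(3) fd Z0 p q same])
qed

theorem mainTheorem8:
  fixes k :: enat
  assumes "k \<ge> 2"
  shows "(\<forall>f. smooth_fun_on k f \<longrightarrow>
            (\<forall>p\<in>Dom. Dxb k (Dyb k f) p = Dyb k (Dxb k f) p))
       \<and> (\<forall>f. smooth_fun_on k f \<and> (\<forall>p\<in>Dom. Dxb k f p = 0 \<and> Dyb k f p = 0) \<longrightarrow>
            (\<forall>p\<in>Dom. \<forall>q\<in>Dom. (p (CU 0) < p (CV 0) \<longleftrightarrow> q (CU 0) < q (CV 0)) \<longrightarrow> f p = f q))"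
  using part1 part2 by blast


end
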